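(* Let $h\in(0,1)$ and $K\in C^h([0,T])$, let $K_n$ be the Bernstein polynomial approximation of $K$ of order $n$, and let $u\in L^2_a$. Let $X^u$ and $X^u_n$ be the solutions of $$X^u(t)=X(0)+\int_0^tK(t-s)(\alpha u(s)-\beta X^u(s))ds+\sigma\int_0^tK(t-s)dW(s),$$ $$X^u_n(t)=X(0)+\int_0^tK_n(t-s)(\alpha u(s)-\beta X^u_n(s))ds+\sigma\int_0^tK_n(t-s)dW(s),\quad t\in[0,T].$$ Then there exists $C>0$, not depending on $n$ or $u$, such that for any $u\in L^2_a$, $$\sup_{t\in[0,T]}\mathbb E\big[|X^u(t)-X^u_n(t)|^2\big]\le C(1+\|u\|_2^2)n^{-h}.$$
   Context: Fix $T>0$ and constants $\alpha,\beta,\sigma>0$, $X(0)\in\mathbb R$. $W$ is a standard one-dimensional Brownian motion; $L^2_a$ is the space of real-valued square-integrable processes on $\Omega\times[0,T]$ adapted to the filtration generated by $W$; $\|\cdot\|_2$ is the $L^2(\Omega\times[0,T])$ norm. $C^h([0,T])$ is the set of $h$-Hölder continuous functions on $[0,T]$. The Bernstein polynomial approximation of order $n$ of $K$ is $K_n(t)=\frac{1}{T^n}\sum_{k=0}^nK\big(\frac{Tk}{n}\big)\binom nk t^k(T-t)^{n-k}$, $t\in[0,T]$. *)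

theory Defs
  imports "HOL-Probability.Probability"
begin

definition holder_on :: "real \<Rightarrow> real set \<Rightarrow> (real \<Rightarrow> real) \<Rightarrow> bool" where
  "holder_on h S f \<longleftrightarrow> (\<exists>L. \<forall>x\<in>S. \<forall>y\<in>S. \<bar>f x - f y\<bar> \<le> L * \<bar>x - y\<bar> powr h)"

definition bernstein :: "real \<Rightarrow> (real \<Rightarrow> real) \<Rightarrow> nat \<Rightarrow> real \<Rightarrow> real" where
  "bernstein T K n t = (1 / T ^ n) *
     (\<Sum>k\<le>n. K (T * real k / real n) * real (n choose k) * t ^ k * (T - t) ^ (n - k))"

definition std_brownian_motion :: "'a measure \<Rightarrow> (real \<Rightarrow> 'a \<Rightarrow> real) \<Rightarrow> bool" where
  "std_brownian_motion M W \<longleftrightarrow>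
     prob_space M \<and>
     (\<forall>t. W t \<in> borel_measurable M) \<and>
     (AE \<omega> in M. W 0 \<omega> = 0) \<and>
     (AE \<omega> in M. continuous_on {0..} (\<lambda>t. W t \<omega>)) \<and>
     (\<forall>s t. 0 \<le> s \<and> s < t \<longrightarrow>
        distributed M lborel (\<lambda>\<omega>. W t \<omega> - W s \<omega>) (normal_density 0 (sqrt (t - s)))) \<and>
     (\<forall>ts :: nat \<Rightarrow> real. \<forall>k. (0 \<le> ts 0 \<and> (\<forall>i<k. ts i < ts (Suc i))) \<longrightarrow>
        prob_space.indep_vars M (\<lambda>_. borel) (\<lambda>i \<omega>. W (ts (Suc i)) \<omega> - W (ts i) \<omega>) {..<k})"

definition bm_filtration :: "'a measure \<Rightarrow> (real \<Rightarrow> 'a \<Rightarrow> real) \<Rightarrow> real \<Rightarrow> 'a measure" where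
  "bm_filtration M W t = sigma (space M)
     ({W s -` B \<inter> space M | s B. 0 \<le> s \<and> s \<le> t \<and> B \<in> sets borel} \<union> null_sets M)"

abbreviation prod_T :: "'a measure \<Rightarrow> real \<Rightarrow> ('a \<times> real) measure" where
  "prod_T M T \<equiv> M \<Otimes>\<^sub>M restrict_space lborel {0..T}"

definition L2a :: "'a measure \<Rightarrow> (real \<Rightarrow> 'a \<Rightarrow> real) \<Rightarrow> real \<Rightarrow> (real \<Rightarrow> 'a \<Rightarrow> real) set" where
  "L2a M W T = {u. (\<lambda>(\<omega>, t). u t \<omega>) \<in> borel_measurable (prod_T M T) \<and>
                   integrable (prod_T M T) (\<lambda>(\<omega>, t). (u t \<omega>)\<^sup>2) \<and>
                   (\<forall>t\<in>{0..T}. u t \<in> borel_measurable (bm_filtration M W t))}"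

definition L2norm_sq :: "'a measure \<Rightarrow> real \<Rightarrow> (real \<Rightarrow> 'a \<Rightarrow> real) \<Rightarrow> real" where
  "L2norm_sq M T u = (\<integral>(\<omega>, t). (u t \<omega>)\<^sup>2 \<partial>prod_T M T)"

text \<open>Z is (a version of) the Wiener integral \<integral>_0^t g(s) dW(s) of a deterministic
  continuous integrand g: the L^2(M)-limit of the left-point Riemann sums over
  uniform partitions of [0,t].\<close>
definition wiener_integral :: "'a measure \<Rightarrow> (real \<Rightarrow> 'a \<Rightarrow> real) \<Rightarrow> (real \<Rightarrow> real) \<Rightarrow> real \<Rightarrow> ('a \<Rightarrow> real) \<Rightarrow> bool" where
  "wiener_integral M W g t Z \<longleftrightarrow>
     Z \<in> borel_measurable M \<and> integrable M (\<lambda>\<omega>. (Z \<omega>)\<^sup>2) \<and>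
     ((\<lambda>m. \<integral>\<^sup>+\<omega>. ennreal ((Z \<omega> - (\<Sum>i<m. g (t * real i / real m) *
           (W (t * real (Suc i) / real m) \<omega> - W (t * real i / real m) \<omega>)))\<^sup>2) \<partial>M)
        \<longlonglongrightarrow> 0)"

definition volterra_solution ::
  "'a measure \<Rightarrow> (real \<Rightarrow> 'a \<Rightarrow> real) \<Rightarrow> real \<Rightarrow> real \<Rightarrow> real \<Rightarrow> real \<Rightarrow> real \<Rightarrow>
   (real \<Rightarrow> real) \<Rightarrow> (real \<Rightarrow> 'a \<Rightarrow> real) \<Rightarrow> (real \<Rightarrow> 'a \<Rightarrow> real) \<Rightarrow> bool" where
  "volterra_solution M W T X0 \<alpha> \<beta> \<sigma> k u X \<longleftrightarrow>
     (\<lambda>(\<omega>, t). X t \<omega>) \<in> borel_measurable (prod_T M T) \<and>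
     (AE \<omega> in M. set_integrable lborel {0..T} (\<lambda>s. X s \<omega>)) \<and>
     (\<forall>t\<in>{0..T}. \<exists>Z. wiener_integral M W (\<lambda>s. k (t - s)) t Z \<and>
        (AE \<omega> in M. X t \<omega> = X0 + (\<integral>s\<in>{0..t}. k (t - s) * (\<alpha> * u s \<omega> - \<beta> * X s \<omega>) \<partial>lborel)
                              + \<sigma> * Z \<omega>))"

end

theory Submission
  imports Defs
begin

lemma gronwall_cont:
  fixes F :: "real \<Rightarrow> real"
  assumes T: "0 \<le> T" and c: "0 \<le> c" and cont: "continuous_on {0..T} F"
    and ineq: "\<And>t. t \<in> {0..T} \<Longrightarrow> F t \<le> A + c * integral {0..t} F"
    and t: "t \<in> {0..T}"
  shows "F t \<le> A * exp (c * t)"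
proof -
  define G where "G x = exp (- c * x) * (A + c * integral {0..x} F)" for x
  have der: "(G has_real_derivative exp (- c * x) * (c * F x - c * (A + c * integral {0..x} F))) (at x)"
    if "0 < x" "x < t" for x
  proof -
    have "((\<lambda>x. integral {0..x} F) has_real_derivative F x) (at x within {0..t})"
    proof (rule integral_has_real_derivative)
      show "continuous_on {0..t} F" using cont t by (auto intro: continuous_on_subset)
    qed (use that in auto)
    then have d: "((\<lambda>x. integral {0..x} F) has_real_derivative F x) (at x)"
      using at_within_Icc_at[of 0 x t] that by simp
    show ?thesis unfolding G_def
      by (rule derivative_eq_intros d refl | simp)+ (simp add: algebra_simps)
  qed
  have contG: "continuous_on {0..t} G"
  proof -
    have "continuous_on {0..t} (\<lambda>x. integral {0..x} F)"
      by (rule indefinite_integral_continuous_1, rule integrable_continuous_interval)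
         (use cont t in \<open>auto intro: continuous_on_subset\<close>)
    then show ?thesis unfolding G_def by (intro continuous_intros)
  qed
  have "G t \<le> G 0"
  proof (rule DERIV_nonpos_imp_decreasing_open[of 0 t G])
    show "0 \<le> t" using t by simp
    fix x assume x: "0 < x" "x < t"
    have "F x \<le> A + c * integral {0..x} F" using ineq x t by auto
    then have "c * F x \<le> c * (A + c * integral {0..x} F)" using c by (rule mult_left_mono)
    then have "exp (- c * x) * (c * F x - c * (A + c * integral {0..x} F)) \<le> 0"
      by (intro mult_nonneg_nonpos) auto
    then show "\<exists>y. (G has_real_derivative y) (at x) \<and> y \<le> 0" using der[OF x] by blast
  qed (rule contG)
  then have "exp (- c * t) * (A + c * integral {0..t} F) \<le> A" by (simp add: G_def)
  then have "A + c * integral {0..t} F \<le> A * exp (c * t)"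
    by (simp add: exp_minus field_simps)
  then show ?thesis using ineq[OF t] by linarith
qed

lemma gronwall_L1:
  fixes y a :: "real \<Rightarrow> real"
  assumes T: "0 \<le> T" and c: "0 \<le> c"
    and iy: "set_integrable lborel {0..T} y" and ia: "set_integrable lborel {0..T} a"
    and a0: "\<And>t. t \<in> {0..T} \<Longrightarrow> 0 \<le> a t"
    and ineq: "\<And>t. t \<in> {0..T} \<Longrightarrow> \<bar>y t\<bar> \<le> a t + c * (\<integral>s\<in>{0..t}. \<bar>y s\<bar> \<partial>lborel)"
    and t: "t \<in> {0..T}"
  shows "\<bar>y t\<bar> \<le> a t + c * exp (c * T) * (\<integral>s\<in>{0..T}. a s \<partial>lborel)"
proof -
  define F where "F x = integral {0..x} (\<lambda>s. \<bar>y s\<bar>)" for x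
  have iyx: "set_integrable lborel {0..x} (\<lambda>s. \<bar>y s\<bar>)" if "x \<in> {0..T}" for x
    using that by (intro set_integrable_abs set_integrable_subset[OF iy]) auto
  have Fe: "(\<integral>s\<in>{0..x}. \<bar>y s\<bar> \<partial>lborel) = F x" if "x \<in> {0..T}" for x
    unfolding F_def using set_borel_integral_eq_integral(2)[OF iyx[OF that]] .
  have yI: "(\<lambda>s. \<bar>y s\<bar>) integrable_on {0..x}" if "x \<in> {0..T}" for x
    using set_borel_integral_eq_integral(1)[OF iyx[OF that]] .
  have aI: "a integrable_on {0..x}" if "x \<in> {0..T}" for x
    using that by (intro set_borel_integral_eq_integral(1) set_integrable_subset[OF ia]) auto
  have contF: "continuous_on {0..T} F"
    unfolding F_def by (rule indefinite_integral_continuous_1) (use yI T in auto)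
  define A where "A = integral {0..T} a"
  have A0: "0 \<le> A" unfolding A_def using a0 by (intro integral_nonneg aI) (use T in auto)
  have Fb: "F x \<le> A + c * integral {0..x} F" if x: "x \<in> {0..T}" for x
  proof -
    have FI: "F integrable_on {0..x}"
      by (rule integrable_continuous_interval, rule continuous_on_subset[OF contF]) (use x in auto)
    have "F x \<le> integral {0..x} (\<lambda>s. a s + c * F s)"
      unfolding F_def[of x]
    proof (rule integral_le)
      show "(\<lambda>s. a s + c * F s) integrable_on {0..x}"
        using integrable_add[OF aI[OF x] integrable_on_cmult_left[OF FI, of c]] by simp
      fix s assume s: "s \<in> {0..x}"
      then have "s \<in> {0..T}" using x by auto
      then show "\<bar>y s\<bar> \<le> a s + c * F s" using ineq Fe by auto
    qed (rule yI[OF x])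
    also have "\<dots> = integral {0..x} a + c * integral {0..x} F"
      using integral_add[OF aI[OF x] integrable_on_cmult_left[OF FI, of c]] by simp
    also have "integral {0..x} a \<le> A"
      unfolding A_def by (rule integral_subset_le) (use x aI[of T] aI[OF x] T a0 in auto)
    finally show ?thesis by simp
  qed
  have "F t \<le> A * exp (c * t)" by (rule gronwall_cont[OF T c contF Fb t])
  also have "\<dots> \<le> A * exp (c * T)" using t A0 c by (auto intro!: mult_left_mono mult_left_mono)
  finally have "c * F t \<le> c * (A * exp (c * T))" using c by (rule mult_left_mono)
  moreover have "A = (\<integral>s\<in>{0..T}. a s \<partial>lborel)"
    unfolding A_def using set_borel_integral_eq_integral(2)[OF ia] by simp
  ultimately show ?thesis using ineq[OF t] Fe[OF t] by (simp add: algebra_simps)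
qed

lemma cs_interval:
  fixes a :: "real \<Rightarrow> real"
  assumes ma: "a \<in> borel_measurable lborel" and a0: "\<And>s. 0 \<le> a s" and T: "0 \<le> T"
    and fin: "(\<integral>\<^sup>+ s. ennreal ((a s)\<^sup>2) * indicator {0..T} s \<partial>lborel) < \<infinity>"
  shows "set_integrable lborel {0..T} a"
    and "ennreal ((\<integral>s\<in>{0..T}. a s \<partial>lborel)\<^sup>2)
           \<le> ennreal T * (\<integral>\<^sup>+ s. ennreal ((a s)\<^sup>2) * indicator {0..T} s \<partial>lborel)"
proof -
  let ?Q = "\<integral>\<^sup>+ s. ennreal ((a s)\<^sup>2) * indicator {0..T} s \<partial>lborel"
  let ?f = "\<lambda>s. ennreal (a s) * indicator {0..T} s"
  have "(\<integral>\<^sup>+ s. ?f s * indicator {0..T} s \<partial>lborel)\<^sup>2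
        \<le> (\<integral>\<^sup>+ s. (?f s)\<^sup>2 \<partial>lborel) * (\<integral>\<^sup>+ s. (indicator {0..T} s :: ennreal)\<^sup>2 \<partial>lborel)"
    by (rule Cauchy_Schwarz_nn_integral) (use ma in auto)
  also have "(\<integral>\<^sup>+ s. (?f s)\<^sup>2 \<partial>lborel) = ?Q"
    by (intro nn_integral_cong) (auto simp: indicator_def ennreal_power[symmetric] a0)
  also have "(\<integral>\<^sup>+ s. (indicator {0..T} s :: ennreal)\<^sup>2 \<partial>lborel) = ennreal T"
  proof -
    have "(\<integral>\<^sup>+ s. (indicator {0..T} s :: ennreal)\<^sup>2 \<partial>lborel) = (\<integral>\<^sup>+ s. indicator {0..T} s \<partial>lborel)"
      by (intro nn_integral_cong) (auto simp: indicator_def)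
    then show ?thesis using T by simp
  qed
  also have "(\<integral>\<^sup>+ s. ?f s * indicator {0..T} s \<partial>lborel) = (\<integral>\<^sup>+ s. ?f s \<partial>lborel)"
    by (intro nn_integral_cong) (auto simp: indicator_def)
  finally have CS: "(\<integral>\<^sup>+ s. ?f s \<partial>lborel)\<^sup>2 \<le> ?Q * ennreal T" .
  have ftop: "(\<integral>\<^sup>+ s. ?f s \<partial>lborel) < \<infinity>"
  proof -
    have "(\<integral>\<^sup>+ s. ?f s \<partial>lborel)\<^sup>2 < \<infinity>"
    proof (rule le_less_trans[OF CS])
      show "?Q * ennreal T < \<infinity>" using fin by (simp add: ennreal_mult_less_top)
    qed
    then show ?thesis by (simp add: power_less_top_ennreal)
  qed
  have eqf: "(\<integral>\<^sup>+ s. ennreal (norm (indicator {0..T} s *\<^sub>R a s)) \<partial>lborel) = (\<integral>\<^sup>+ s. ?f s \<partial>lborel)"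
    by (intro nn_integral_cong) (auto simp: indicator_def a0)
  show si: "set_integrable lborel {0..T} a"
    unfolding set_integrable_def
    by (rule integrableI_bounded) (use ma ftop eqf in auto)
  have fI: "(\<integral>\<^sup>+ s. ?f s \<partial>lborel) = ennreal (\<integral>s\<in>{0..T}. a s \<partial>lborel)"
    unfolding set_lebesgue_integral_def
    by (subst nn_integral_eq_integral[symmetric])
       (use si[unfolded set_integrable_def] in \<open>auto simp: a0 intro!: nn_integral_cong split: split_indicator\<close>)
  then show "ennreal ((\<integral>s\<in>{0..T}. a s \<partial>lborel)\<^sup>2) \<le> ennreal T * ?Q"
  proof -
    have "0 \<le> (\<integral>s\<in>{0..T}. a s \<partial>lborel)"
      unfolding set_lebesgue_integral_def by (intro integral_nonneg_AE) (auto simp: a0)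
    then show ?thesis using CS fI by (simp add: ennreal_power[symmetric] mult.commute)
  qed
qed

lemma pair_sf_M_lborel: "prob_space M \<Longrightarrow> pair_sigma_finite M lborel"
  by (intro pair_sigma_finite.intro) (auto simp: prob_space_imp_sigma_finite lborel.sigma_finite_measure_axioms)

lemma sq_sum_le: "((x::real) + y)\<^sup>2 \<le> 2 * x\<^sup>2 + 2 * y\<^sup>2"
proof -
  have "0 \<le> (x - y)\<^sup>2" by simp
  then show ?thesis by (simp add: power2_eq_square algebra_simps)
qed

lemma gronwall_expect:
  fixes Y a :: "'a \<Rightarrow> real \<Rightarrow> real"
  assumes P: "prob_space M" and T: "0 \<le> T" and c: "0 \<le> c" and A: "0 \<le> A"
   and mY: "(\<lambda>(\<omega>, t). Y \<omega> t) \<in> borel_measurable (M \<Otimes>\<^sub>M lborel)"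
   and ma: "(\<lambda>(\<omega>, t). a \<omega> t) \<in> borel_measurable (M \<Otimes>\<^sub>M lborel)"
   and a0: "\<And>\<omega> t. 0 \<le> a \<omega> t"
   and AEY: "AE \<omega> in M. set_integrable lborel {0..T} (Y \<omega>) \<and>
        (\<forall>t\<in>{0..T}. \<bar>Y \<omega> t\<bar> \<le> a \<omega> t + c * (\<integral>s\<in>{0..t}. \<bar>Y \<omega> s\<bar> \<partial>lborel))"
   and bnd: "\<And>s. s \<in> {0..T} \<Longrightarrow> (\<integral>\<^sup>+\<omega>. ennreal ((a \<omega> s)\<^sup>2) \<partial>M) \<le> ennreal A"
   and t: "t \<in> {0..T}"
  shows "(\<integral>\<^sup>+\<omega>. ennreal ((Y \<omega> t)\<^sup>2) \<partial>M) \<le> ennreal ((2 + 2 * (c * exp (c * T))\<^sup>2 * T\<^sup>2) * A)"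
proof -
  interpret prob_space M by (rule P)
  interpret pair_sigma_finite M lborel by (rule pair_sf_M_lborel[OF P])
  define K where "K = c * exp (c * T)"
  have K0: "0 \<le> K" unfolding K_def using c by simp
  define Q where "Q \<omega> = (\<integral>\<^sup>+ s. ennreal ((a \<omega> s)\<^sup>2) * indicator {0..T} s \<partial>lborel)" for \<omega>
  note [measurable] = ma mY
  have mQ: "Q \<in> borel_measurable M" unfolding Q_def by measurable
  have ma2: "(\<lambda>(\<omega>, s). ennreal ((a \<omega> s)\<^sup>2) * indicator {0..T} s) \<in> borel_measurable (M \<Otimes>\<^sub>M lborel)"
    by measurable
  have EQ: "(\<integral>\<^sup>+\<omega>. Q \<omega> \<partial>M) \<le> ennreal (T * A)"
  proof -
    have "(\<integral>\<^sup>+\<omega>. Q \<omega> \<partial>M) = (\<integral>\<^sup>+ s. \<integral>\<^sup>+\<omega>. ennreal ((a \<omega> s)\<^sup>2) * indicator {0..T} s \<partial>M \<partial>lborel)"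
      unfolding Q_def using Fubini'[OF ma2] by simp
    also have "\<dots> = (\<integral>\<^sup>+ s. (\<integral>\<^sup>+\<omega>. ennreal ((a \<omega> s)\<^sup>2) \<partial>M) * indicator {0..T} s \<partial>lborel)"
      by (intro nn_integral_cong nn_integral_multc) measurable
    also have "\<dots> \<le> (\<integral>\<^sup>+ s. ennreal A * indicator {0..T} s \<partial>lborel)"
      by (intro nn_integral_mono) (auto simp: bnd split: split_indicator)
    also have "\<dots> = ennreal (T * A)" using T A
      by (simp add: nn_integral_cmult_indicator ennreal_mult mult.commute)
    finally show ?thesis .
  qed
  have Qfin: "AE \<omega> in M. Q \<omega> \<noteq> \<infinity>"
    by (rule nn_integral_PInf_AE[OF mQ]) (use EQ in \<open>auto simp: top_unique\<close>)
  have ptw: "AE \<omega> in M. ennreal ((Y \<omega> t)\<^sup>2) \<le> 2 * ennreal ((a \<omega> t)\<^sup>2) + ennreal (2 * K\<^sup>2 * T) * Q \<omega>"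
    using Qfin AEY AE_space[of M]
  proof eventually_elim
    case (elim \<omega>)
    have maw: "a \<omega> \<in> borel_measurable lborel"
      using measurable_Pair2[OF ma \<open>\<omega> \<in> space M\<close>] by (simp only: case_prod_conv)
    have fin: "Q \<omega> < \<infinity>" using elim(1) by (simp add: less_top)
    have yi: "set_integrable lborel {0..T} (Y \<omega>)" using elim(2) by blast
    have yin: "\<And>t. t \<in> {0..T} \<Longrightarrow> \<bar>Y \<omega> t\<bar> \<le> a \<omega> t + c * (\<integral>s\<in>{0..t}. \<bar>Y \<omega> s\<bar> \<partial>lborel)"
      using elim(2) by blast
    note cs = cs_interval[OF maw a0 T fin[unfolded Q_def]]
    define I where "I = (\<integral>s\<in>{0..T}. a \<omega> s \<partial>lborel)"
    have "\<bar>Y \<omega> t\<bar> \<le> a \<omega> t + K * I"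
      unfolding K_def I_def
      by (rule gronwall_L1[OF T c yi cs(1) a0 yin t])
    moreover have "0 \<le> I" unfolding I_def set_lebesgue_integral_def
      by (intro integral_nonneg_AE) (auto simp: a0)
    ultimately have "(Y \<omega> t)\<^sup>2 \<le> (a \<omega> t + K * I)\<^sup>2"
      by (metis abs_ge_zero power2_abs power_mono)
    also have "\<dots> \<le> 2 * (a \<omega> t)\<^sup>2 + 2 * K\<^sup>2 * I\<^sup>2"
      using sq_sum_le[of "a \<omega> t" "K * I"] by (simp add: power_mult_distrib)
    finally have "ennreal ((Y \<omega> t)\<^sup>2) \<le> ennreal (2 * (a \<omega> t)\<^sup>2) + ennreal (2 * K\<^sup>2) * ennreal (I\<^sup>2)"
      by (simp add: ennreal_plus[symmetric] ennreal_mult[symmetric] del: ennreal_plus)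
    also have "\<dots> \<le> ennreal (2 * (a \<omega> t)\<^sup>2) + ennreal (2 * K\<^sup>2) * (ennreal T * Q \<omega>)"
      using cs(2) unfolding I_def Q_def by (intro add_mono mult_left_mono) auto
    also have "ennreal (2 * K\<^sup>2) * (ennreal T * Q \<omega>) = ennreal (2 * K\<^sup>2 * T) * Q \<omega>"
      using T by (simp add: ennreal_mult mult.assoc)
    also have "ennreal (2 * (a \<omega> t)\<^sup>2) = 2 * ennreal ((a \<omega> t)\<^sup>2)"
      by (simp add: ennreal_mult)
    finally show ?case .
  qed
  have "(\<integral>\<^sup>+\<omega>. ennreal ((Y \<omega> t)\<^sup>2) \<partial>M) \<le> (\<integral>\<^sup>+\<omega>. 2 * ennreal ((a \<omega> t)\<^sup>2) + ennreal (2 * K\<^sup>2 * T) * Q \<omega> \<partial>M)"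
    by (rule nn_integral_mono_AE[OF ptw])
  also have "\<dots> = 2 * (\<integral>\<^sup>+\<omega>. ennreal ((a \<omega> t)\<^sup>2) \<partial>M) + ennreal (2 * K\<^sup>2 * T) * (\<integral>\<^sup>+\<omega>. Q \<omega> \<partial>M)"
    using mQ by (subst nn_integral_add) (auto simp: nn_integral_cmult)
  also have "\<dots> \<le> 2 * ennreal A + ennreal (2 * K\<^sup>2 * T) * ennreal (T * A)"
    using bnd[OF t] EQ by (intro add_mono mult_left_mono) auto
  also have "\<dots> = ennreal (2 * A + 2 * K\<^sup>2 * T * (T * A))"
  proof -
    have e1: "2 * ennreal A = ennreal (2 * A)" using A by (simp add: ennreal_mult)
    have e2: "ennreal (2 * K\<^sup>2 * T) * ennreal (T * A) = ennreal (2 * K\<^sup>2 * T * (T * A))"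
      by (rule ennreal_mult[symmetric]) (use A T in auto)
    have e3: "ennreal (2 * A) + ennreal (2 * K\<^sup>2 * T * (T * A)) = ennreal (2 * A + 2 * K\<^sup>2 * T * (T * A))"
      by (rule ennreal_plus[symmetric]) (use A T in auto)
    show ?thesis using e1 e2 e3 by simp
  qed
  also have "\<dots> = ennreal ((2 + 2 * K\<^sup>2 * T\<^sup>2) * A)"
    by (rule arg_cong[where f=ennreal]) (simp add: algebra_simps power2_eq_square)
  finally show ?thesis unfolding K_def .
qed

lemma sq_sum_expand:
  fixes c :: "nat \<Rightarrow> real"
  shows "(\<Sum>i<m. c i * D i)\<^sup>2 = (\<Sum>i<m. \<Sum>j<m. c i * c j * (D i * D j))"
  by (simp add: power2_eq_square sum_product algebra_simps)

lemma riemann_sq_bound: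
  fixes c :: "nat \<Rightarrow> real"
  assumes BM: "std_brownian_motion M W" and t: "0 \<le> t" and cG: "\<And>i. i < m \<Longrightarrow> \<bar>c i\<bar> \<le> G"
  shows "(\<integral>\<^sup>+\<omega>. ennreal ((\<Sum>i<m. c i * (W (t * real (Suc i) / real m) \<omega> - W (t * real i / real m) \<omega>))\<^sup>2) \<partial>M)
         \<le> ennreal (G\<^sup>2 * t)"
proof (cases "t = 0 \<or> m = 0")
  case True
  then have "\<And>\<omega>. (\<Sum>i<m. c i * (W (t * real (Suc i) / real m) \<omega> - W (t * real i / real m) \<omega>)) = 0"
    by auto
  then show ?thesis by simp
next
  case False
  then have t0: "0 < t" and m0: "0 < m" using t by auto
  interpret prob_space M using BM unfolding std_brownian_motion_def by blast
  define D where "D i \<omega> = W (t * real (Suc i) / real m) \<omega> - W (t * real i / real m) \<omega>" for i \<omega>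
  have Wm: "\<And>s. W s \<in> borel_measurable M" using BM unfolding std_brownian_motion_def by blast
  have mD[measurable]: "D i \<in> borel_measurable M" for i unfolding D_def using Wm by measurable
  have sig: "0 < sqrt (t / real m)" using t0 m0 by simp
  have dist: "distributed M lborel (D i) (normal_density 0 (sqrt (t / real m)))" for i
  proof -
    have lt: "t * real i / real m < t * real (Suc i) / real m"
      using t0 m0 by (simp add: divide_strict_right_mono)
    have eq: "t * real (Suc i) / real m - t * real i / real m = t / real m"
      using m0 by (simp add: field_simps)
    have "0 \<le> t * real i / real m" using t by simp
    then show ?thesis
      using BM lt unfolding std_brownian_motion_def D_def eq[symmetric] by auto
  qed
  have intD2: "integrable M (\<lambda>\<omega>. (D i \<omega>)\<^sup>2)" for i
  proof -
    have "integrable lborel (\<lambda>x. normal_density 0 (sqrt (t / real m)) x * x\<^sup>2)"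
      using integrable_normal_moment[OF sig, of 0 2] by simp
    then show ?thesis using distributed_integrable[OF dist[of i], of "\<lambda>x. x\<^sup>2"] by simp
  qed
  have intD: "integrable M (D i)" for i
    by (rule distributed_integrable_var[OF dist[of i]]) (auto intro: integrable_normal_moment_nz_1[OF sig])
  have ED: "expectation (D i) = 0" for i
    by (rule normal_distributed_expectation[OF sig dist])
  have ED2: "expectation (\<lambda>\<omega>. (D i \<omega>)\<^sup>2) = t / real m" for i
    using normal_distributed_variance[OF sig dist[of i]] ED[of i] t m0 by simp
  have indep: "indep_vars (\<lambda>_. borel) D {..<m}"
  proof -
    define ts where "ts i = t * real i / real m" for i
    have "0 \<le> ts 0 \<and> (\<forall>i<m. ts i < ts (Suc i))"
      unfolding ts_def using t0 m0 by (auto simp: divide_strict_right_mono)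
    then have "indep_vars (\<lambda>_. borel) (\<lambda>i \<omega>. W (ts (Suc i)) \<omega> - W (ts i) \<omega>) {..<m}"
      using BM unfolding std_brownian_motion_def by blast
    then show ?thesis unfolding ts_def D_def by simp
  qed
  have cross: "integrable M (\<lambda>\<omega>. D i \<omega> * D j \<omega>) \<and> expectation (\<lambda>\<omega>. D i \<omega> * D j \<omega>) = 0"
    if ij: "i < m" "j < m" "i \<noteq> j" for i j
  proof -
    have "indep_vars (\<lambda>_. borel) D (insert i {j})"
      by (rule indep_vars_subset[OF indep]) (use ij in auto)
    from indep_vars_sum[OF _ _ this] ij
    have "indep_var borel (D i) borel (\<lambda>\<omega>. \<Sum>k\<in>{j}. D k \<omega>)" by auto
    then have iv: "indep_var borel (D i) borel (D j)" by simp
    show ?thesis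
      using indep_var_lebesgue_integral[OF iv intD intD] indep_var_integrable[OF iv intD intD] ED
      by simp
  qed
  have Eij: "integrable M (\<lambda>\<omega>. D i \<omega> * D j \<omega>) \<and> expectation (\<lambda>\<omega>. D i \<omega> * D j \<omega>) = (if j = i then t / real m else 0)"
    if ij: "i < m" "j < m" for i j
    using cross[OF ij] intD2[of i] ED2[of i] by (cases "i = j") (auto simp: power2_eq_square)
  have sq: "(\<lambda>\<omega>. (\<Sum>i<m. c i * D i \<omega>)\<^sup>2) = (\<lambda>\<omega>. \<Sum>i<m. \<Sum>j<m. c i * c j * (D i \<omega> * D j \<omega>))"
    by (simp add: sq_sum_expand)
  have int: "integrable M (\<lambda>\<omega>. (\<Sum>i<m. c i * D i \<omega>)\<^sup>2)"
  proof -
    have "integrable M (\<lambda>\<omega>. \<Sum>i<m. \<Sum>j<m. c i * c j * (D i \<omega> * D j \<omega>))"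
    proof (rule Bochner_Integration.integrable_sum, rule Bochner_Integration.integrable_sum)
      fix i j assume "i \<in> {..<m}" "j \<in> {..<m}"
      then have "integrable M (\<lambda>\<omega>. D i \<omega> * D j \<omega>)" using Eij by auto
      then show "integrable M (\<lambda>\<omega>. c i * c j * (D i \<omega> * D j \<omega>))" by simp
    qed
    then show ?thesis unfolding sq .
  qed
  have "expectation (\<lambda>\<omega>. (\<Sum>i<m. c i * D i \<omega>)\<^sup>2) = (\<Sum>i<m. \<Sum>j<m. c i * c j * expectation (\<lambda>\<omega>. D i \<omega> * D j \<omega>))"
  proof -
    have ii: "integrable M (\<lambda>\<omega>. c i * c j * (D i \<omega> * D j \<omega>))" if "i < m" "j < m" for i j
      using Eij[OF that] by simp
    have "expectation (\<lambda>\<omega>. \<Sum>i<m. \<Sum>j<m. c i * c j * (D i \<omega> * D j \<omega>))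
       = (\<Sum>i<m. expectation (\<lambda>\<omega>. \<Sum>j<m. c i * c j * (D i \<omega> * D j \<omega>)))"
      by (rule Bochner_Integration.integral_sum) (use ii in auto)
    also have "\<dots> = (\<Sum>i<m. \<Sum>j<m. expectation (\<lambda>\<omega>. c i * c j * (D i \<omega> * D j \<omega>)))"
      by (intro sum.cong refl Bochner_Integration.integral_sum) (use ii in auto)
    finally show ?thesis unfolding sq by simp
  qed
  also have "\<dots> = (\<Sum>i<m. \<Sum>j<m. (if j = i then c i * c i * (t / real m) else 0))"
    using Eij by (intro sum.cong refl) auto
  also have "\<dots> = (\<Sum>i<m. c i * c i * (t / real m))"
    by simp
  also have "\<dots> \<le> (\<Sum>i<m. G\<^sup>2 * (t / real m))"
  proof (intro sum_mono mult_right_mono)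
    fix i assume "i \<in> {..<m}"
    then have "\<bar>c i\<bar> \<le> G" using cG by auto
    then have "\<bar>c i\<bar>\<^sup>2 \<le> G\<^sup>2" by (intro power_mono) auto
    then show "c i * c i \<le> G\<^sup>2" by (simp add: power2_eq_square)
  qed (use t in auto)
  also have "\<dots> = G\<^sup>2 * t" using m0 by simp
  finally have "expectation (\<lambda>\<omega>. (\<Sum>i<m. c i * D i \<omega>)\<^sup>2) \<le> G\<^sup>2 * t" .
  moreover have "(\<integral>\<^sup>+\<omega>. ennreal ((\<Sum>i<m. c i * D i \<omega>)\<^sup>2) \<partial>M) = ennreal (expectation (\<lambda>\<omega>. (\<Sum>i<m. c i * D i \<omega>)\<^sup>2))"
    by (rule nn_integral_eq_integral[OF int]) auto
  ultimately show ?thesis unfolding D_def by (simp add: ennreal_leI)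
qed

lemma sq_diff_le: "((x::real) - y)\<^sup>2 \<le> 2 * x\<^sup>2 + 2 * y\<^sup>2"
proof -
  have "0 \<le> (x + y)\<^sup>2" by simp
  then show ?thesis by (simp add: power2_eq_square algebra_simps)
qed

lemma enn_lin: assumes "0 \<le> p" "0 \<le> q" "0 \<le> x" "0 \<le> y" "0 \<le> z"
 shows "ennreal (p * x + q * (2 * y + 2 * z)) = ennreal p * ennreal x + ennreal q * (2 * ennreal y + 2 * ennreal z)"
  using assms by (simp add: ennreal_plus ennreal_mult zero_le_mult_iff)

lemma sq_eps_le:
  fixes a b e :: real assumes e: "0 < e"
  shows "(a + b)\<^sup>2 \<le> (1 + e) * a\<^sup>2 + (1 + 1 / e) * b\<^sup>2"
proof -
  have "0 \<le> (e * a - b)\<^sup>2" by simp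
  then have "2 * e * (a * b) \<le> e * (e * a\<^sup>2) + b\<^sup>2"
    by (simp add: power2_eq_square algebra_simps)
  then have "2 * (a * b) \<le> e * a\<^sup>2 + b\<^sup>2 / e"
    using e by (simp add: field_simps)
  then show ?thesis
    using e by (simp add: power2_eq_square algebra_simps add_divide_distrib)
qed

lemma wiener_diff_bound:
  assumes BM: "std_brownian_motion M W" and t: "0 \<le> t"
    and wZ: "wiener_integral M W g t Z" and wZ': "wiener_integral M W g' t Z'"
    and gG: "\<And>s. s \<in> {0..t} \<Longrightarrow> \<bar>g s - g' s\<bar> \<le> G"
  shows "(\<integral>\<^sup>+\<omega>. ennreal ((Z \<omega> - Z' \<omega>)\<^sup>2) \<partial>M) \<le> ennreal (G\<^sup>2 * t)"
proof -
  interpret prob_space M using BM unfolding std_brownian_motion_def by blast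
  have Wm[measurable]: "\<And>s. W s \<in> borel_measurable M" using BM unfolding std_brownian_motion_def by blast
  have G0: "0 \<le> G" using gG[of 0] t by auto
  define S where "S h m \<omega> = (\<Sum>i<m. h (t * real i / real m) *
           (W (t * real (Suc i) / real m) \<omega> - W (t * real i / real m) \<omega>))" for h m \<omega>
  have mS[measurable]: "S h m \<in> borel_measurable M" for h m unfolding S_def by measurable
  have mZ[measurable]: "Z \<in> borel_measurable M" and mZ'[measurable]: "Z' \<in> borel_measurable M"
    using wZ wZ' unfolding wiener_integral_def by auto
  define e where "e h Y m = (\<integral>\<^sup>+\<omega>. ennreal ((Y \<omega> - S h m \<omega>)\<^sup>2) \<partial>M)" for h Y m
  have eZ: "e g Z \<longlonglongrightarrow> 0" and eZ': "e g' Z' \<longlonglongrightarrow> 0"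
    using wZ wZ' unfolding wiener_integral_def e_def S_def by auto
  define V where "V m \<omega> = S g m \<omega> - S g' m \<omega>" for m \<omega>
  have Vb: "(\<integral>\<^sup>+\<omega>. ennreal ((V m \<omega>)\<^sup>2) \<partial>M) \<le> ennreal (G\<^sup>2 * t)" for m
  proof -
    have "V m \<omega> = (\<Sum>i<m. (g (t * real i / real m) - g' (t * real i / real m)) *
           (W (t * real (Suc i) / real m) \<omega> - W (t * real i / real m) \<omega>))" for \<omega>
      unfolding V_def S_def by (simp add: sum_subtractf[symmetric] algebra_simps)
    moreover have "\<bar>g (t * real i / real m) - g' (t * real i / real m)\<bar> \<le> G" if "i < m" for i
    proof (rule gG)
      have "t * real i / real m \<le> t * real m / real m"
        using t that by (intro divide_right_mono mult_left_mono) auto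
      also have "\<dots> \<le> t" using that by auto
      finally show "t * real i / real m \<in> {0..t}" using t by auto
    qed
    ultimately show ?thesis
      using riemann_sq_bound[OF BM t, of m "\<lambda>i. g (t * real i / real m) - g' (t * real i / real m)" G]
      by simp
  qed
  have main: "(\<integral>\<^sup>+\<omega>. ennreal ((Z \<omega> - Z' \<omega>)\<^sup>2) \<partial>M) \<le> ennreal ((1 + \<epsilon>) * (G\<^sup>2 * t))"
    if \<epsilon>: "0 < \<epsilon>" for \<epsilon>
  proof -
    define R where "R m = ennreal ((1 + \<epsilon>) * (G\<^sup>2 * t)) + ennreal (1 + 1 / \<epsilon>) * (2 * e g Z m + 2 * e g' Z' m)" for m
    have bnd: "(\<integral>\<^sup>+\<omega>. ennreal ((Z \<omega> - Z' \<omega>)\<^sup>2) \<partial>M) \<le> R m" for m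
    proof -
      have pw: "ennreal ((Z \<omega> - Z' \<omega>)\<^sup>2) \<le> ennreal (1 + \<epsilon>) * ennreal ((V m \<omega>)\<^sup>2)
           + ennreal (1 + 1 / \<epsilon>) * (2 * ennreal ((Z \<omega> - S g m \<omega>)\<^sup>2) + 2 * ennreal ((Z' \<omega> - S g' m \<omega>)\<^sup>2))" for \<omega>
      proof -
        have "(Z \<omega> - Z' \<omega>)\<^sup>2 \<le> (1 + \<epsilon>) * (V m \<omega>)\<^sup>2 + (1 + 1 / \<epsilon>) * ((Z \<omega> - S g m \<omega>) - (Z' \<omega> - S g' m \<omega>))\<^sup>2"
          using sq_eps_le[OF \<epsilon>, of "V m \<omega>" "(Z \<omega> - S g m \<omega>) - (Z' \<omega> - S g' m \<omega>)"]
          unfolding V_def by (simp add: algebra_simps)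
        also have "\<dots> \<le> (1 + \<epsilon>) * (V m \<omega>)\<^sup>2 + (1 + 1 / \<epsilon>) * (2 * (Z \<omega> - S g m \<omega>)\<^sup>2 + 2 * (Z' \<omega> - S g' m \<omega>)\<^sup>2)"
          using sq_diff_le[of "Z \<omega> - S g m \<omega>" "Z' \<omega> - S g' m \<omega>"] \<epsilon>
          by (intro add_left_mono mult_left_mono) auto
        finally have "ennreal ((Z \<omega> - Z' \<omega>)\<^sup>2) \<le> ennreal ((1 + \<epsilon>) * (V m \<omega>)\<^sup>2 + (1 + 1 / \<epsilon>) * (2 * (Z \<omega> - S g m \<omega>)\<^sup>2 + 2 * (Z' \<omega> - S g' m \<omega>)\<^sup>2))"
          by (rule ennreal_leI)
        also have "\<dots> = ennreal (1 + \<epsilon>) * ennreal ((V m \<omega>)\<^sup>2)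
           + ennreal (1 + 1 / \<epsilon>) * (2 * ennreal ((Z \<omega> - S g m \<omega>)\<^sup>2) + 2 * ennreal ((Z' \<omega> - S g' m \<omega>)\<^sup>2))"
          using \<epsilon> by (intro enn_lin) auto
        finally show ?thesis .
      qed
      have "(\<integral>\<^sup>+\<omega>. ennreal ((Z \<omega> - Z' \<omega>)\<^sup>2) \<partial>M) \<le> (\<integral>\<^sup>+\<omega>. ennreal (1 + \<epsilon>) * ennreal ((V m \<omega>)\<^sup>2)
           + ennreal (1 + 1 / \<epsilon>) * (2 * ennreal ((Z \<omega> - S g m \<omega>)\<^sup>2) + 2 * ennreal ((Z' \<omega> - S g' m \<omega>)\<^sup>2)) \<partial>M)"
        by (rule nn_integral_mono) (rule pw)
      also have "\<dots> = ennreal (1 + \<epsilon>) * (\<integral>\<^sup>+\<omega>. ennreal ((V m \<omega>)\<^sup>2) \<partial>M)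
           + ennreal (1 + 1 / \<epsilon>) * (2 * e g Z m + 2 * e g' Z' m)"
        unfolding e_def V_def
        by (simp add: nn_integral_add nn_integral_cmult)
      also have "\<dots> \<le> ennreal (1 + \<epsilon>) * ennreal (G\<^sup>2 * t) + ennreal (1 + 1 / \<epsilon>) * (2 * e g Z m + 2 * e g' Z' m)"
        by (intro add_right_mono mult_left_mono Vb) auto
      also have "\<dots> = R m"
        unfolding R_def using \<epsilon> G0 t by (simp add: ennreal_mult)
      finally show ?thesis .
    qed
    have "R \<longlonglongrightarrow> ennreal ((1 + \<epsilon>) * (G\<^sup>2 * t)) + ennreal (1 + 1 / \<epsilon>) * (2 * 0 + 2 * 0)"
      unfolding R_def
      by (intro tendsto_add tendsto_const ennreal_tendsto_cmult eZ eZ') auto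
    then have "R \<longlonglongrightarrow> ennreal ((1 + \<epsilon>) * (G\<^sup>2 * t))" by simp
    then show ?thesis
      by (rule LIMSEQ_le_const) (use bnd in auto)
  qed
  show ?thesis
  proof (rule ennreal_le_epsilon)
    fix d :: real assume d: "0 < d"
    define \<epsilon> where "\<epsilon> = d / (G\<^sup>2 * t + 1)"
    have \<epsilon>0: "0 < \<epsilon>" unfolding \<epsilon>_def using d G0 t by (simp add: add_nonneg_pos)
    have "(1 + \<epsilon>) * (G\<^sup>2 * t) = G\<^sup>2 * t + d * (G\<^sup>2 * t / (G\<^sup>2 * t + 1))"
      unfolding \<epsilon>_def by (simp add: algebra_simps)
    also have "\<dots> \<le> G\<^sup>2 * t + d * 1"
    proof -
      have nn: "0 \<le> G\<^sup>2 * t" using t by simp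
      then have "G\<^sup>2 * t / (G\<^sup>2 * t + 1) \<le> 1" by (subst divide_le_eq_1_pos) auto
      then show ?thesis using d by (intro add_left_mono mult_left_mono) auto
    qed
    finally have "ennreal ((1 + \<epsilon>) * (G\<^sup>2 * t)) \<le> ennreal (G\<^sup>2 * t) + ennreal d"
      using d G0 t by (simp add: ennreal_plus[symmetric] del: ennreal_plus)
    then show "(\<integral>\<^sup>+\<omega>. ennreal ((Z \<omega> - Z' \<omega>)\<^sup>2) \<partial>M) \<le> ennreal (G\<^sup>2 * t) + ennreal d"
      using main[OF \<epsilon>0] by (rule order_trans[rotated])
  qed
qed

lemma bernstein_eq:
  assumes T: "0 < T"
  shows "bernstein T K n x = (\<Sum>k\<le>n. K (T * real k / real n) * Bernstein n k (x / T))"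
  unfolding bernstein_def Bernstein_def sum_distrib_left
proof (intro sum.cong refl)
  fix k assume k: "k \<in> {..n}"
  have Tn: "T ^ n = T ^ k * T ^ (n - k)" using k by (simp add: power_add[symmetric])
  have "1 - x / T = (T - x) / T" using T by (simp add: field_simps)
  then show "1 / T ^ n * (K (T * real k / real n) * real (n choose k) * x ^ k * (T - x) ^ (n - k)) =
      K (T * real k / real n) * (real (n choose k) * (x / T) ^ k * (1 - x / T) ^ (n - k))"
    using T by (simp add: Tn power_divide field_simps)
qed

lemma powr_split_bound:
  fixes z e h :: real
  assumes z: "0 \<le> z" and e: "0 < e" and h: "0 < h" "h < 2"
  shows "z powr h \<le> e powr h + e powr (h - 2) * z\<^sup>2"
proof (cases "z \<le> e")
  case True
  then have "z powr h \<le> e powr h" using z h by (intro powr_mono2) auto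
  moreover have "0 \<le> e powr (h - 2) * z\<^sup>2" by simp
  ultimately show ?thesis by linarith
next
  case False
  then have ze: "e < z" by simp
  then have z0: "0 < z" using e by simp
  have z2: "z powr 2 = z\<^sup>2" using z0 by (simp add: powr_numeral)
  have "z powr h = z powr (h - 2) * z powr 2"
    by (simp add: powr_add[symmetric])
  also have "\<dots> = z powr (h - 2) * z\<^sup>2" by (simp add: z2)
  also have "\<dots> \<le> e powr (h - 2) * z\<^sup>2"
    using ze e h by (intro mult_right_mono powr_mono2') auto
  finally have "z powr h \<le> e powr (h - 2) * z\<^sup>2" .
  moreover have "0 \<le> e powr h" by simp
  ultimately show ?thesis by linarith
qed

lemma bernstein_error:
  fixes K :: "real \<Rightarrow> real"
  assumes T: "0 < T" and h: "0 < h" "h < 2" and n: "1 \<le> n"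
    and L: "\<And>x y. x \<in> {0..T} \<Longrightarrow> y \<in> {0..T} \<Longrightarrow> \<bar>K x - K y\<bar> \<le> L * \<bar>x - y\<bar> powr h"
    and x: "x \<in> {0..T}"
  shows "\<bar>K x - bernstein T K n x\<bar> \<le> 2 * \<bar>L\<bar> * T powr h * real n powr (- h / 2)"
proof -
  define y where "y = x / T"
  have y: "0 \<le> y" "y \<le> 1" using x T unfolding y_def by auto
  define p where "p k = Bernstein n k y" for k
  have p0: "0 \<le> p k" for k unfolding p_def using y by (rule Bernstein_nonneg)
  have kT: "T * real k / real n \<in> {0..T}" if "k \<le> n" for k
  proof -
    have "real k / real n \<le> 1" using that n by auto
    then have "T * (real k / real n) \<le> T * 1" using T by (intro mult_left_mono) auto
    then show ?thesis using T by auto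
  qed
  have "bernstein T K n x - K x = (\<Sum>k\<le>n. (K (T * real k / real n) - K x) * p k)"
    unfolding bernstein_eq[OF T] p_def y_def
    by (simp add: algebra_simps sum_subtractf sum_distrib_left[symmetric])
  then have "\<bar>K x - bernstein T K n x\<bar> = \<bar>\<Sum>k\<le>n. (K (T * real k / real n) - K x) * p k\<bar>"
    by (simp add: abs_minus_commute)
  also have "\<dots> \<le> (\<Sum>k\<le>n. \<bar>(K (T * real k / real n) - K x) * p k\<bar>)" by (rule sum_abs)
  also have "\<dots> = (\<Sum>k\<le>n. \<bar>K (T * real k / real n) - K x\<bar> * p k)"
    using p0 by (simp add: abs_mult)
  also have "\<dots> \<le> (\<Sum>k\<le>n. (\<bar>L\<bar> * T powr h) * (\<bar>real k / real n - y\<bar> powr h * p k))"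
  proof (intro sum_mono)
    fix k assume k: "k \<in> {..n}"
    have "\<bar>K (T * real k / real n) - K x\<bar> \<le> L * \<bar>T * real k / real n - x\<bar> powr h"
      using L kT k x by auto
    also have "\<dots> \<le> \<bar>L\<bar> * \<bar>T * real k / real n - x\<bar> powr h"
      by (intro mult_right_mono) auto
    also have "\<bar>T * real k / real n - x\<bar> = T * \<bar>real k / real n - y\<bar>"
    proof -
      have "T * real k / real n - x = T * (real k / real n - y)"
        unfolding y_def using T by (simp add: field_simps)
      then show ?thesis using T by (simp add: abs_mult)
    qed
    also have "(T * \<bar>real k / real n - y\<bar>) powr h = T powr h * \<bar>real k / real n - y\<bar> powr h"
      using T by (simp add: powr_mult)
    finally have "\<bar>K (T * real k / real n) - K x\<bar> \<le> \<bar>L\<bar> * (T powr h * \<bar>real k / real n - y\<bar> powr h)"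
      by (simp add: mult.assoc)
    from mult_right_mono[OF this p0[of k]]
    show "\<bar>K (T * real k / real n) - K x\<bar> * p k \<le> (\<bar>L\<bar> * T powr h) * (\<bar>real k / real n - y\<bar> powr h * p k)"
      by (simp add: mult.assoc)
  qed
  also have "\<dots> = (\<bar>L\<bar> * T powr h) * (\<Sum>k\<le>n. \<bar>real k / real n - y\<bar> powr h * p k)"
    by (simp add: sum_distrib_left)
  also have "(\<Sum>k\<le>n. \<bar>real k / real n - y\<bar> powr h * p k) \<le> 2 * real n powr (- h / 2)"
  proof -
    define e where "e = real n powr (- 1 / 2)"
    have e0: "0 < e" unfolding e_def using n by simp
    have sb: "(\<Sum>k\<le>n. (y - k / n)\<^sup>2 * Bernstein n k y) = y * (1 - y) / n"
    proof -
      have *: "\<And>a b x::real. (a - b)\<^sup>2 * x = a * (a - 1) * x + (1 - 2 * b) * a * x + b * b * x"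
        by (simp add: algebra_simps power2_eq_square)
      have "(\<Sum>k\<le>n. (k - n * y)\<^sup>2 * Bernstein n k y) = n * y * (1 - y)"
        apply (simp add: * sum.distrib)
        apply (simp flip: sum_distrib_left add: mult.assoc)
        apply (simp add: algebra_simps power2_eq_square)
        done
      then have "(\<Sum>k\<le>n. (k - n * y)\<^sup>2 * Bernstein n k y)/n^2 = y * (1 - y) / n"
        by (simp add: power2_eq_square)
      then show ?thesis
        using n by (simp add: sum_divide_distrib field_split_simps power2_commute)
    qed
    have "(\<Sum>k\<le>n. \<bar>real k / real n - y\<bar> powr h * p k) \<le> (\<Sum>k\<le>n. (e powr h + e powr (h - 2) * (y - k / n)\<^sup>2) * p k)"
    proof (intro sum_mono mult_right_mono p0)
      fix k
      show "\<bar>real k / real n - y\<bar> powr h \<le> e powr h + e powr (h - 2) * (y - real k / real n)\<^sup>2"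
        using powr_split_bound[of "\<bar>real k / real n - y\<bar>" e h] e0 h by (simp add: power2_commute)
    qed
    also have "\<dots> = e powr h * (\<Sum>k\<le>n. p k) + e powr (h - 2) * (\<Sum>k\<le>n. (y - k / n)\<^sup>2 * p k)"
      by (simp add: algebra_simps sum.distrib sum_distrib_left)
    also have "\<dots> = e powr h + e powr (h - 2) * (y * (1 - y) / n)"
      unfolding p_def sb by simp
    also have "\<dots> \<le> e powr h + e powr (h - 2) * (1 / n)"
    proof -
      have "y * (1 - y) \<le> 1" using y by (simp add: mult_le_one)
      then have "y * (1 - y) / n \<le> 1 / n" using n by (simp add: divide_right_mono)
      then show ?thesis by (intro add_left_mono mult_left_mono) auto
    qed
    also have "e powr h = real n powr (- h / 2)"
      unfolding e_def using n by (simp add: powr_powr)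
    also have "e powr (h - 2) * (1 / n) = real n powr (- h / 2)"
    proof -
      have "e powr (h - 2) = real n powr (1 - h / 2)"
      proof -
        have "- 1 / 2 * (h - 2) = 1 - h / 2" by (simp add: field_simps)
        then show ?thesis unfolding e_def using n by (simp add: powr_powr)
      qed
      also have "\<dots> = real n * real n powr (- h / 2)"
      proof -
        have eqe: "1 - h / 2 = 1 + (- h / 2)" by simp
        have "real n powr (1 - h / 2) = real n powr 1 * real n powr (- h / 2)"
          unfolding eqe by (rule powr_add)
        then show ?thesis using n by simp
      qed
      finally show ?thesis using n by simp
    qed
    finally show ?thesis by simp
  qed
  then have "(\<bar>L\<bar> * T powr h) * (\<Sum>k\<le>n. \<bar>real k / real n - y\<bar> powr h * p k) \<le> (\<bar>L\<bar> * T powr h) * (2 * real n powr (- h / 2))"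
    by (intro mult_left_mono) auto
  finally show ?thesis by (simp add: algebra_simps)
qed

lemma bernstein_bound:
  fixes K :: "real \<Rightarrow> real"
  assumes T: "0 < T" and n: "1 \<le> n" and Kb: "\<And>x. x \<in> {0..T} \<Longrightarrow> \<bar>K x\<bar> \<le> B"
    and x: "x \<in> {0..T}"
  shows "\<bar>bernstein T K n x\<bar> \<le> B"
proof -
  define y where "y = x / T"
  have y: "0 \<le> y" "y \<le> 1" using x T unfolding y_def by auto
  have kT: "T * real k / real n \<in> {0..T}" if "k \<le> n" for k
  proof -
    have "real k / real n \<le> 1" using that n by auto
    then have "T * (real k / real n) \<le> T * 1" using T by (intro mult_left_mono) auto
    then show ?thesis using T by auto
  qed
  have "\<bar>bernstein T K n x\<bar> \<le> (\<Sum>k\<le>n. \<bar>K (T * real k / real n) * Bernstein n k y\<bar>)"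
    unfolding bernstein_eq[OF T] y_def by (rule sum_abs)
  also have "\<dots> \<le> (\<Sum>k\<le>n. B * Bernstein n k y)"
    using Bernstein_nonneg[OF y] Kb kT by (intro sum_mono) (auto simp: abs_mult intro!: mult_right_mono)
  also have "\<dots> = B" by (simp add: sum_distrib_left[symmetric])
  finally show ?thesis .
qed

definition clampT :: "real \<Rightarrow> real \<Rightarrow> real" where
  "clampT T s = max 0 (min T s)"

lemma clampT_in: "0 \<le> T \<Longrightarrow> clampT T s \<in> {0..T}"
  unfolding clampT_def by auto

lemma clampT_ge0[simp]: "0 \<le> clampT T s"
  unfolding clampT_def by auto

lemma clampT_le[simp]: "0 \<le> T \<Longrightarrow> clampT T s \<le> T"
  unfolding clampT_def by auto

lemma pred_le_real[measurable (raw)]: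
  "f \<in> borel_measurable M \<Longrightarrow> g \<in> borel_measurable M \<Longrightarrow> Measurable.pred M (\<lambda>w. (f w::real) \<le> g w)"
  unfolding Measurable.pred_def by (rule borel_measurable_le)

lemma clampT_id: "s \<in> {0..T} \<Longrightarrow> clampT T s = s"
  unfolding clampT_def by auto

lemma clampT_cont: "continuous_on A (clampT T)"
  unfolding clampT_def by (intro continuous_intros)

lemma clampT_meas[measurable]: "clampT T \<in> borel_measurable borel"
  by (rule borel_measurable_continuous_onI[OF clampT_cont])

lemma meas_clamp:
  assumes X: "(\<lambda>(\<omega>, t). X t \<omega>) \<in> borel_measurable (M \<Otimes>\<^sub>M restrict_space lborel {0..T})" and T: "0 \<le> T"
  shows "(\<lambda>p. X (clampT T (snd p)) (fst p)) \<in> borel_measurable (M \<Otimes>\<^sub>M lborel)"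
proof -
  have m: "(\<lambda>p. (fst p, clampT T (snd p))) \<in> M \<Otimes>\<^sub>M lborel \<rightarrow>\<^sub>M M \<Otimes>\<^sub>M restrict_space lborel {0..T}"
  proof (rule measurable_Pair)
    show "(\<lambda>p. clampT T (snd p)) \<in> M \<Otimes>\<^sub>M lborel \<rightarrow>\<^sub>M restrict_space lborel {0..T}"
      by (rule measurable_restrict_space2) (use T in \<open>auto simp: clampT_in[OF T]\<close>)
  qed simp
  from measurable_compose[OF m X] show ?thesis by simp
qed

lemma kc_meas:
  assumes k: "continuous_on {0..T} k" and T: "0 \<le> T"
  shows "(\<lambda>x. k (clampT T x)) \<in> borel_measurable borel"
proof (rule borel_measurable_continuous_onI)
  show "continuous_on UNIV (\<lambda>x. k (clampT T x))"
    by (rule continuous_on_compose2[OF k clampT_cont]) (use T in \<open>auto simp: clampT_in[OF T]\<close>)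
qed

lemma measurable_I:
  fixes f :: "'a \<Rightarrow> real \<Rightarrow> real" and kc :: "real \<Rightarrow> real"
  assumes kc[measurable]: "kc \<in> borel_measurable borel"
    and f[measurable]: "(\<lambda>p. f (fst p) (snd p)) \<in> borel_measurable (M \<Otimes>\<^sub>M lborel)"
  shows "(\<lambda>p. \<integral>s. indicator {0..snd p} s * (kc (snd p - s) * f (fst p) s) \<partial>lborel) \<in> borel_measurable (M \<Otimes>\<^sub>M lborel)"
proof -
  have ind: "(\<lambda>q. indicator {0..snd (fst q)} (snd q) :: real) \<in> borel_measurable ((M \<Otimes>\<^sub>M (lborel::real measure)) \<Otimes>\<^sub>M (lborel::real measure))"
  proof -
    have "(\<lambda>q::('a \<times> real) \<times> real. indicator {0..snd (fst q)} (snd q) :: real) = (\<lambda>q. indicator {0..} (snd q) * indicator {0..} (snd (fst q) - snd q))"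
      by (auto simp: indicator_def fun_eq_iff)
    also have "\<dots> \<in> borel_measurable ((M \<Otimes>\<^sub>M (lborel::real measure)) \<Otimes>\<^sub>M (lborel::real measure))"
      by measurable
    finally show ?thesis .
  qed
  have f2: "(\<lambda>q. f (fst (fst q)) (snd q)) \<in> borel_measurable ((M \<Otimes>\<^sub>M (lborel::real measure)) \<Otimes>\<^sub>M (lborel::real measure))"
  proof -
    have "(\<lambda>q. (fst (fst q), snd q)) \<in> (M \<Otimes>\<^sub>M (lborel::real measure)) \<Otimes>\<^sub>M (lborel::real measure) \<rightarrow>\<^sub>M M \<Otimes>\<^sub>M lborel" by measurable
    from measurable_compose[OF this f] show ?thesis by simp
  qed
  have "(\<lambda>q. indicator {0..snd (fst q)} (snd q) * (kc (snd (fst q) - snd q) * f (fst (fst q)) (snd q)))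
        \<in> borel_measurable ((M \<Otimes>\<^sub>M (lborel::real measure)) \<Otimes>\<^sub>M (lborel::real measure))"
    using ind f2 by measurable
  then have "case_prod (\<lambda>p s. indicator {0..snd p} s * (kc (snd p - s) * f (fst p) s)) \<in> borel_measurable ((M \<Otimes>\<^sub>M (lborel::real measure)) \<Otimes>\<^sub>M (lborel::real measure))"
    by (simp add: case_prod_beta')
  then show ?thesis by (rule lborel.borel_measurable_lebesgue_integral)
qed

lemma sf_restrict: "sigma_finite_measure (restrict_space lborel {0..(T::real)})"
  by (intro sigma_finite_measure_restrict_space) (auto simp: lborel.sigma_finite_measure_axioms)

lemma psf_restrict: "prob_space M \<Longrightarrow> pair_sigma_finite M (restrict_space lborel {0..(T::real)})"
  by (intro pair_sigma_finite.intro) (auto simp: prob_space_imp_sigma_finite sf_restrict)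

lemma u_facts:
  fixes u :: "real \<Rightarrow> 'a \<Rightarrow> real"
  assumes P: "prob_space M" and T: "0 \<le> T" and uL: "u \<in> L2a M W T"
  shows u_meas: "(\<lambda>p. u (clampT T (snd p)) (fst p)) \<in> borel_measurable (M \<Otimes>\<^sub>M lborel)"
    and u_nn: "(\<integral>\<^sup>+\<omega>. (\<integral>\<^sup>+ s. ennreal ((u (clampT T s) \<omega>)\<^sup>2) * indicator {0..T} s \<partial>lborel) \<partial>M) = ennreal (L2norm_sq M T u)"
    and u_AE: "AE \<omega> in M. (\<integral>\<^sup>+ s. ennreal ((u (clampT T s) \<omega>)\<^sup>2) * indicator {0..T} s \<partial>lborel) < \<infinity>"
    and u_L2nn: "0 \<le> L2norm_sq M T u"
proof -
  have m: "(\<lambda>(\<omega>, t). u t \<omega>) \<in> borel_measurable (prod_T M T)"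
    and int: "integrable (prod_T M T) (\<lambda>(\<omega>, t). (u t \<omega>)\<^sup>2)"
    using uL unfolding L2a_def by auto
  show um: "(\<lambda>p. u (clampT T (snd p)) (fst p)) \<in> borel_measurable (M \<Otimes>\<^sub>M lborel)"
    by (rule meas_clamp[OF m T])
  show "0 \<le> L2norm_sq M T u" unfolding L2norm_sq_def
    by (intro integral_nonneg_AE) (auto split: prod.splits)
  interpret sfr: sigma_finite_measure "restrict_space lborel {0..T}" by (rule sf_restrict)
  have m2: "(\<lambda>x. ennreal ((case x of (\<omega>, t) \<Rightarrow> u t \<omega>)\<^sup>2)) \<in> borel_measurable (prod_T M T)"
    using m by measurable
  have "(\<integral>\<^sup>+ x. ennreal ((case x of (\<omega>, t) \<Rightarrow> u t \<omega>)\<^sup>2) \<partial>prod_T M T) = ennreal (L2norm_sq M T u)"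
    unfolding L2norm_sq_def
    by (subst nn_integral_eq_integral[symmetric]) (use int in \<open>auto intro!: nn_integral_cong split: prod.splits\<close>)
  moreover have "(\<integral>\<^sup>+ x. ennreal ((case x of (\<omega>, t) \<Rightarrow> u t \<omega>)\<^sup>2) \<partial>prod_T M T)
      = (\<integral>\<^sup>+\<omega>. (\<integral>\<^sup>+ t. ennreal ((u t \<omega>)\<^sup>2) \<partial>restrict_space lborel {0..T}) \<partial>M)"
    using sfr.nn_integral_fst[OF m2] by simp
  moreover have "(\<integral>\<^sup>+ t. ennreal ((u t \<omega>)\<^sup>2) \<partial>restrict_space lborel {0..T})
      = (\<integral>\<^sup>+ s. ennreal ((u (clampT T s) \<omega>)\<^sup>2) * indicator {0..T} s \<partial>lborel)" for \<omega>
    by (subst nn_integral_restrict_space) (auto intro!: nn_integral_cong simp: clampT_id split: split_indicator)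
  ultimately show un: "(\<integral>\<^sup>+\<omega>. (\<integral>\<^sup>+ s. ennreal ((u (clampT T s) \<omega>)\<^sup>2) * indicator {0..T} s \<partial>lborel) \<partial>M) = ennreal (L2norm_sq M T u)"
    by simp
  have mi: "(\<lambda>\<omega>. \<integral>\<^sup>+ s. ennreal ((u (clampT T s) \<omega>)\<^sup>2) * indicator {0..T} s \<partial>lborel) \<in> borel_measurable M"
  proof (rule lborel.borel_measurable_nn_integral)
    have "(\<lambda>p. ennreal ((u (clampT T (snd p)) (fst p))\<^sup>2) * indicator {0..T} (snd p)) \<in> borel_measurable (M \<Otimes>\<^sub>M lborel)"
      using um by measurable
    then show "case_prod (\<lambda>\<omega> s. ennreal ((u (clampT T s) \<omega>)\<^sup>2) * indicator {0..T} s) \<in> borel_measurable (M \<Otimes>\<^sub>M lborel)"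
      by (simp add: case_prod_beta')
  qed
  show "AE \<omega> in M. (\<integral>\<^sup>+ s. ennreal ((u (clampT T s) \<omega>)\<^sup>2) * indicator {0..T} s \<partial>lborel) < \<infinity>"
    using nn_integral_PInf_AE[OF mi] un by (simp add: less_top)
qed

definition Ipath :: "real \<Rightarrow> real \<Rightarrow> real \<Rightarrow> (real \<Rightarrow> real) \<Rightarrow> (real \<Rightarrow> 'a \<Rightarrow> real) \<Rightarrow> (real \<Rightarrow> 'a \<Rightarrow> real) \<Rightarrow> 'a \<Rightarrow> real \<Rightarrow> real" where
  "Ipath T \<alpha> \<beta> k u X \<omega> t = (\<integral>s. indicator {0..t} s * (k (clampT T (t - s)) * (\<alpha> * u (clampT T s) \<omega> - \<beta> * X (clampT T s) \<omega>)) \<partial>lborel)"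

lemma sol_facts:
  fixes u X :: "real \<Rightarrow> 'a \<Rightarrow> real"
  assumes P: "prob_space M" and T: "0 < T" and uL: "u \<in> L2a M W T"
    and sol: "volterra_solution M W T X0 \<alpha> \<beta> \<sigma> k u X" and kc: "continuous_on {0..T} k"
  shows X_meas: "(\<lambda>p. X (clampT T (snd p)) (fst p)) \<in> borel_measurable (M \<Otimes>\<^sub>M lborel)"
    and I_meas: "(\<lambda>p. Ipath T \<alpha> \<beta> k u X (fst p) (snd p)) \<in> borel_measurable (M \<Otimes>\<^sub>M lborel)"
    and X_AE: "AE \<omega> in M. set_integrable lborel {0..T} (\<lambda>s. X (clampT T s) \<omega>)"
    and X_W: "\<And>t. t \<in> {0..T} \<Longrightarrow> \<exists>Z. wiener_integral M W (\<lambda>s. k (t - s)) t Z \<and>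
                 (AE \<omega> in M. X t \<omega> = X0 + Ipath T \<alpha> \<beta> k u X \<omega> t + \<sigma> * Z \<omega>)"
proof -
  have T0: "0 \<le> T" using T by simp
  have m: "(\<lambda>(\<omega>, t). X t \<omega>) \<in> borel_measurable (prod_T M T)"
    and ae: "AE \<omega> in M. set_integrable lborel {0..T} (\<lambda>s. X s \<omega>)"
    and eq: "\<And>t. t \<in> {0..T} \<Longrightarrow> \<exists>Z. wiener_integral M W (\<lambda>s. k (t - s)) t Z \<and>
        (AE \<omega> in M. X t \<omega> = X0 + (\<integral>s\<in>{0..t}. k (t - s) * (\<alpha> * u s \<omega> - \<beta> * X s \<omega>) \<partial>lborel) + \<sigma> * Z \<omega>)"
    using sol unfolding volterra_solution_def by auto
  show Xm: "(\<lambda>p. X (clampT T (snd p)) (fst p)) \<in> borel_measurable (M \<Otimes>\<^sub>M lborel)"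
    by (rule meas_clamp[OF m T0])
  note um = u_meas[OF P T0 uL]
  show "(\<lambda>p. Ipath T \<alpha> \<beta> k u X (fst p) (snd p)) \<in> borel_measurable (M \<Otimes>\<^sub>M lborel)"
    unfolding Ipath_def
  proof (rule measurable_I[OF kc_meas[OF kc T0], where f="\<lambda>\<omega> s. \<alpha> * u (clampT T s) \<omega> - \<beta> * X (clampT T s) \<omega>"])
    show "(\<lambda>p. \<alpha> * u (clampT T (snd p)) (fst p) - \<beta> * X (clampT T (snd p)) (fst p)) \<in> borel_measurable (M \<Otimes>\<^sub>M lborel)"
      using um Xm by measurable
  qed
  show "AE \<omega> in M. set_integrable lborel {0..T} (\<lambda>s. X (clampT T s) \<omega>)"
    using ae by eventually_elim (subst set_integrable_cong[OF refl refl], auto simp: clampT_id)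
  fix t assume t: "t \<in> {0..T}"
  obtain Z where Z: "wiener_integral M W (\<lambda>s. k (t - s)) t Z"
    and ZAE: "AE \<omega> in M. X t \<omega> = X0 + (\<integral>s\<in>{0..t}. k (t - s) * (\<alpha> * u s \<omega> - \<beta> * X s \<omega>) \<partial>lborel) + \<sigma> * Z \<omega>"
    using eq[OF t] by blast
  have "(\<integral>s\<in>{0..t}. k (t - s) * (\<alpha> * u s \<omega> - \<beta> * X s \<omega>) \<partial>lborel) = Ipath T \<alpha> \<beta> k u X \<omega> t" for \<omega>
    unfolding Ipath_def set_lebesgue_integral_def
  proof (intro Bochner_Integration.integral_cong refl)
    fix s
    show "indicator {0..t} s *\<^sub>R (k (t - s) * (\<alpha> * u s \<omega> - \<beta> * X s \<omega>)) =
      indicator {0..t} s * (k (clampT T (t - s)) * (\<alpha> * u (clampT T s) \<omega> - \<beta> * X (clampT T s) \<omega>))"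
    proof (cases "s \<in> {0..t}")
      case True
      then have "t - s \<in> {0..T}" "s \<in> {0..T}" using t by auto
      then show ?thesis using True by (simp add: clampT_id)
    qed simp
  qed
  then show "\<exists>Z. wiener_integral M W (\<lambda>s. k (t - s)) t Z \<and>
                 (AE \<omega> in M. X t \<omega> = X0 + Ipath T \<alpha> \<beta> k u X \<omega> t + \<sigma> * Z \<omega>)"
    using Z ZAE by auto
qed

lemma si_sub_abs:
  assumes "set_integrable lborel {0..T} (f :: real \<Rightarrow> real)" "t \<in> {0..T}"
  shows "integrable lborel (\<lambda>s. indicator {0..t} s * \<bar>f s\<bar>)"
  using set_integrable_abs[OF set_integrable_subset[OF assms(1), of "{0..t}"]] assms(2)
  unfolding set_integrable_def by auto

lemma si_abs_mono:
  assumes "set_integrable lborel {0..T} (f :: real \<Rightarrow> real)" "t \<in> {0..T}"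
  shows "(\<integral>s. indicator {0..t} s * \<bar>f s\<bar> \<partial>lborel) \<le> (\<integral>s. indicator {0..T} s * \<bar>f s\<bar> \<partial>lborel)"
  using assms by (intro integral_mono si_sub_abs[OF assms(1)]) (auto simp: indicator_def)

lemma Ipath_bound:
  fixes uc xc kf :: "real \<Rightarrow> real"
  assumes kfm: "kf \<in> borel_measurable borel" and kb: "\<And>x. \<bar>kf x\<bar> \<le> B"
    and um: "uc \<in> borel_measurable lborel" and xm: "xc \<in> borel_measurable lborel"
    and ui: "set_integrable lborel {0..T} uc" and xi: "set_integrable lborel {0..T} xc"
    and t: "t \<in> {0..T}" and \<alpha>: "0 \<le> \<alpha>" and \<beta>: "0 \<le> \<beta>"
  shows "\<bar>\<integral>s. indicator {0..t} s * (kf (t - s) * (\<alpha> * uc s - \<beta> * xc s)) \<partial>lborel\<bar>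
     \<le> B * (\<alpha> * (\<integral>s. indicator {0..T} s * \<bar>uc s\<bar> \<partial>lborel) + \<beta> * (\<integral>s. indicator {0..t} s * \<bar>xc s\<bar> \<partial>lborel))"
proof -
  have B0: "0 \<le> B" using kb[of 0] by linarith
  define \<phi> where "\<phi> s = indicator {0..t} s * (kf (t - s) * (\<alpha> * uc s - \<beta> * xc s))" for s
  define \<psi> where "\<psi> s = B * \<alpha> * (indicator {0..t} s * \<bar>uc s\<bar>) + B * \<beta> * (indicator {0..t} s * \<bar>xc s\<bar>)" for s
  have ui': "integrable lborel (\<lambda>s. indicator {0..t} s * \<bar>uc s\<bar>)" by (rule si_sub_abs[OF ui t])
  have xi': "integrable lborel (\<lambda>s. indicator {0..t} s * \<bar>xc s\<bar>)" by (rule si_sub_abs[OF xi t])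
  have \<psi>i: "integrable lborel \<psi>" unfolding \<psi>_def using ui' xi' by simp
  have \<phi>m: "\<phi> \<in> borel_measurable lborel" unfolding \<phi>_def using kfm um xm by measurable
  have \<phi>\<psi>: "\<bar>\<phi> s\<bar> \<le> \<psi> s" for s
  proof (cases "s \<in> {0..t}")
    case True
    have "\<bar>kf (t - s) * (\<alpha> * uc s - \<beta> * xc s)\<bar> \<le> B * (\<alpha> * \<bar>uc s\<bar> + \<beta> * \<bar>xc s\<bar>)"
    proof -
      have "\<bar>\<alpha> * uc s - \<beta> * xc s\<bar> \<le> \<alpha> * \<bar>uc s\<bar> + \<beta> * \<bar>xc s\<bar>"
        using \<alpha> \<beta> by (simp add: abs_mult order_trans[OF abs_triangle_ineq4])
      then show ?thesis unfolding abs_mult using kb[of "t - s"] B0 by (intro mult_mono) auto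
    qed
    then show ?thesis using True unfolding \<phi>_def \<psi>_def by (simp add: algebra_simps)
  qed (simp add: \<phi>_def \<psi>_def)
  have \<phi>i: "integrable lborel \<phi>"
    by (rule Bochner_Integration.integrable_bound[OF \<psi>i \<phi>m]) (use \<phi>\<psi> in \<open>auto intro: order_trans[OF _ abs_ge_self]\<close>)
  have "\<bar>integral\<^sup>L lborel \<phi>\<bar> \<le> (\<integral>s. \<bar>\<phi> s\<bar> \<partial>lborel)" by (rule integral_abs_bound)
  also have "\<dots> \<le> integral\<^sup>L lborel \<psi>"
    by (intro integral_mono \<psi>i \<phi>\<psi> integrable_abs \<phi>i)
  also have "\<dots> = B * \<alpha> * (\<integral>s. indicator {0..t} s * \<bar>uc s\<bar> \<partial>lborel) + B * \<beta> * (\<integral>s. indicator {0..t} s * \<bar>xc s\<bar> \<partial>lborel)"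
    unfolding \<psi>_def using ui' xi' by simp
  also have "\<dots> \<le> B * \<alpha> * (\<integral>s. indicator {0..T} s * \<bar>uc s\<bar> \<partial>lborel) + B * \<beta> * (\<integral>s. indicator {0..t} s * \<bar>xc s\<bar> \<partial>lborel)"
    using si_abs_mono[OF ui t] B0 \<alpha> by (intro add_right_mono mult_left_mono) auto
  finally show ?thesis unfolding \<phi>_def by (simp add: algebra_simps)
qed

lemma conv_integrable:
  fixes uc xc kf :: "real \<Rightarrow> real"
  assumes kfm: "kf \<in> borel_measurable borel" and kb: "\<And>x. \<bar>kf x\<bar> \<le> B"
    and um: "uc \<in> borel_measurable lborel" and xm: "xc \<in> borel_measurable lborel"
    and ui: "set_integrable lborel {0..T} uc" and xi: "set_integrable lborel {0..T} xc"
    and t: "t \<in> {0..T}"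
  shows "integrable lborel (\<lambda>s. indicator {0..t} s * (kf (t - s) * (\<alpha> * uc s - \<beta> * xc s)))"
proof -
  have B0: "0 \<le> B" using kb[of 0] by linarith
  have ui': "integrable lborel (\<lambda>s. indicator {0..t} s * \<bar>uc s\<bar>)" by (rule si_sub_abs[OF ui t])
  have xi': "integrable lborel (\<lambda>s. indicator {0..t} s * \<bar>xc s\<bar>)" by (rule si_sub_abs[OF xi t])
  have \<psi>i: "integrable lborel (\<lambda>s. B * \<bar>\<alpha>\<bar> * (indicator {0..t} s * \<bar>uc s\<bar>) + B * \<bar>\<beta>\<bar> * (indicator {0..t} s * \<bar>xc s\<bar>))"
    using ui' xi' by simp
  show ?thesis
  proof (rule Bochner_Integration.integrable_bound[OF \<psi>i])
    show "(\<lambda>s. indicator {0..t} s * (kf (t - s) * (\<alpha> * uc s - \<beta> * xc s))) \<in> borel_measurable lborel"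
      using kfm um xm by measurable
    have "\<bar>indicator {0..t} s * (kf (t - s) * (\<alpha> * uc s - \<beta> * xc s))\<bar>
       \<le> B * \<bar>\<alpha>\<bar> * (indicator {0..t} s * \<bar>uc s\<bar>) + B * \<bar>\<beta>\<bar> * (indicator {0..t} s * \<bar>xc s\<bar>)" for s
    proof (cases "s \<in> {0..t}")
      case True
      have "\<bar>\<alpha> * uc s - \<beta> * xc s\<bar> \<le> \<bar>\<alpha>\<bar> * \<bar>uc s\<bar> + \<bar>\<beta>\<bar> * \<bar>xc s\<bar>"
        by (simp add: abs_mult order_trans[OF abs_triangle_ineq4])
      then have "\<bar>kf (t - s) * (\<alpha> * uc s - \<beta> * xc s)\<bar> \<le> B * (\<bar>\<alpha>\<bar> * \<bar>uc s\<bar> + \<bar>\<beta>\<bar> * \<bar>xc s\<bar>)"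
        unfolding abs_mult using kb[of "t - s"] B0 by (intro mult_mono) auto
      then show ?thesis using True by (simp add: algebra_simps)
    qed simp
    then show "AE s in lborel. norm (indicator {0..t} s * (kf (t - s) * (\<alpha> * uc s - \<beta> * xc s)))
      \<le> norm (B * \<bar>\<alpha>\<bar> * (indicator {0..t} s * \<bar>uc s\<bar>) + B * \<bar>\<beta>\<bar> * (indicator {0..t} s * \<bar>xc s\<bar>))"
      by (auto intro: order_trans[OF _ abs_ge_self])
  qed
qed

lemma Ipath_diff_bound:
  fixes uc xc yc kf kn :: "real \<Rightarrow> real"
  assumes kfm: "kf \<in> borel_measurable borel" and knm: "kn \<in> borel_measurable borel"
    and kfb: "\<And>x. \<bar>kf x\<bar> \<le> B'" and knb: "\<And>x. \<bar>kn x\<bar> \<le> B" and kd: "\<And>x. \<bar>kf x - kn x\<bar> \<le> \<delta>"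
    and um: "uc \<in> borel_measurable lborel" and xm: "xc \<in> borel_measurable lborel" and ym: "yc \<in> borel_measurable lborel"
    and ui: "set_integrable lborel {0..T} uc" and xi: "set_integrable lborel {0..T} xc"
    and yi: "set_integrable lborel {0..T} yc"
    and t: "t \<in> {0..T}" and \<alpha>: "0 \<le> \<alpha>" and \<beta>: "0 \<le> \<beta>"
  shows "\<bar>(\<integral>s. indicator {0..t} s * (kf (t - s) * (\<alpha> * uc s - \<beta> * xc s)) \<partial>lborel)
          - (\<integral>s. indicator {0..t} s * (kn (t - s) * (\<alpha> * uc s - \<beta> * yc s)) \<partial>lborel)\<bar>
     \<le> \<delta> * (\<alpha> * (\<integral>s. indicator {0..T} s * \<bar>uc s\<bar> \<partial>lborel) + \<beta> * (\<integral>s. indicator {0..T} s * \<bar>xc s\<bar> \<partial>lborel))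
       + \<beta> * B * (\<integral>s. indicator {0..t} s * \<bar>xc s - yc s\<bar> \<partial>lborel)"
proof -
  have B0: "0 \<le> B" using knb[of 0] by linarith
  have d0: "0 \<le> \<delta>" using kd[of 0] by linarith
  have i1: "integrable lborel (\<lambda>s. indicator {0..t} s * (kf (t - s) * (\<alpha> * uc s - \<beta> * xc s)))"
    by (rule conv_integrable[OF kfm kfb um xm ui xi t])
  have i2: "integrable lborel (\<lambda>s. indicator {0..t} s * (kn (t - s) * (\<alpha> * uc s - \<beta> * yc s)))"
    by (rule conv_integrable[OF knm knb um ym ui yi t])
  have xyi: "set_integrable lborel {0..T} (\<lambda>s. xc s - yc s)" by (rule set_integral_diff(1)[OF xi yi])
  have ui': "integrable lborel (\<lambda>s. indicator {0..t} s * \<bar>uc s\<bar>)" by (rule si_sub_abs[OF ui t])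
  have xi': "integrable lborel (\<lambda>s. indicator {0..t} s * \<bar>xc s\<bar>)" by (rule si_sub_abs[OF xi t])
  have xyi': "integrable lborel (\<lambda>s. indicator {0..t} s * \<bar>xc s - yc s\<bar>)" by (rule si_sub_abs[OF xyi t])
  define \<phi> where "\<phi> s = indicator {0..t} s * (kf (t - s) * (\<alpha> * uc s - \<beta> * xc s))
      - indicator {0..t} s * (kn (t - s) * (\<alpha> * uc s - \<beta> * yc s))" for s
  define \<psi> where "\<psi> s = \<delta> * \<alpha> * (indicator {0..t} s * \<bar>uc s\<bar>) + \<delta> * \<beta> * (indicator {0..t} s * \<bar>xc s\<bar>)
      + \<beta> * B * (indicator {0..t} s * \<bar>xc s - yc s\<bar>)" for s
  have \<psi>i: "integrable lborel \<psi>" unfolding \<psi>_def using ui' xi' xyi' by simp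
  have \<phi>i: "integrable lborel \<phi>" unfolding \<phi>_def using i1 i2 by simp
  have \<phi>\<psi>: "\<bar>\<phi> s\<bar> \<le> \<psi> s" for s
  proof (cases "s \<in> {0..t}")
    case True
    have eq: "kf (t - s) * (\<alpha> * uc s - \<beta> * xc s) - kn (t - s) * (\<alpha> * uc s - \<beta> * yc s)
       = (kf (t - s) - kn (t - s)) * (\<alpha> * uc s - \<beta> * xc s) + kn (t - s) * (\<beta> * (yc s - xc s))"
      by (simp add: algebra_simps)
    have a1: "\<bar>(kf (t - s) - kn (t - s)) * (\<alpha> * uc s - \<beta> * xc s)\<bar> \<le> \<delta> * (\<alpha> * \<bar>uc s\<bar> + \<beta> * \<bar>xc s\<bar>)"
    proof -
      have "\<bar>\<alpha> * uc s - \<beta> * xc s\<bar> \<le> \<alpha> * \<bar>uc s\<bar> + \<beta> * \<bar>xc s\<bar>"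
        using \<alpha> \<beta> by (simp add: abs_mult order_trans[OF abs_triangle_ineq4])
      then show ?thesis unfolding abs_mult using kd[of "t - s"] d0 by (intro mult_mono) auto
    qed
    have a2: "\<bar>kn (t - s) * (\<beta> * (yc s - xc s))\<bar> \<le> B * (\<beta> * \<bar>xc s - yc s\<bar>)"
      unfolding abs_mult using knb[of "t - s"] B0 \<beta> by (intro mult_mono) (auto simp: abs_minus_commute)
    have "\<bar>\<phi> s\<bar> = \<bar>(kf (t - s) - kn (t - s)) * (\<alpha> * uc s - \<beta> * xc s) + kn (t - s) * (\<beta> * (yc s - xc s))\<bar>"
      unfolding \<phi>_def using True by (simp add: eq[symmetric])
    also have "\<dots> \<le> \<delta> * (\<alpha> * \<bar>uc s\<bar> + \<beta> * \<bar>xc s\<bar>) + B * (\<beta> * \<bar>xc s - yc s\<bar>)"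
      using a1 a2 by (intro order_trans[OF abs_triangle_ineq] add_mono)
    also have "\<dots> = \<psi> s" unfolding \<psi>_def using True by (simp add: algebra_simps)
    finally show ?thesis .
  qed (simp add: \<phi>_def \<psi>_def)
  have "\<bar>(\<integral>s. indicator {0..t} s * (kf (t - s) * (\<alpha> * uc s - \<beta> * xc s)) \<partial>lborel)
          - (\<integral>s. indicator {0..t} s * (kn (t - s) * (\<alpha> * uc s - \<beta> * yc s)) \<partial>lborel)\<bar> = \<bar>integral\<^sup>L lborel \<phi>\<bar>"
    unfolding \<phi>_def using i1 i2 by simp
  also have "\<dots> \<le> (\<integral>s. \<bar>\<phi> s\<bar> \<partial>lborel)" by (rule integral_abs_bound)
  also have "\<dots> \<le> integral\<^sup>L lborel \<psi>"
    by (intro integral_mono \<psi>i \<phi>\<psi> integrable_abs \<phi>i)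
  also have "\<dots> = \<delta> * \<alpha> * (\<integral>s. indicator {0..t} s * \<bar>uc s\<bar> \<partial>lborel) + \<delta> * \<beta> * (\<integral>s. indicator {0..t} s * \<bar>xc s\<bar> \<partial>lborel)
      + \<beta> * B * (\<integral>s. indicator {0..t} s * \<bar>xc s - yc s\<bar> \<partial>lborel)"
    unfolding \<psi>_def using ui' xi' xyi' by simp
  also have "\<dots> \<le> \<delta> * \<alpha> * (\<integral>s. indicator {0..T} s * \<bar>uc s\<bar> \<partial>lborel) + \<delta> * \<beta> * (\<integral>s. indicator {0..T} s * \<bar>xc s\<bar> \<partial>lborel)
      + \<beta> * B * (\<integral>s. indicator {0..t} s * \<bar>xc s - yc s\<bar> \<partial>lborel)"
    using si_abs_mono[OF ui t] si_abs_mono[OF xi t] d0 \<alpha> \<beta>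
    by (intro add_right_mono add_mono mult_left_mono) auto
  finally show ?thesis by (simp add: algebra_simps)
qed

lemma wiener_zero:
  assumes "prob_space M"
  shows "wiener_integral M W (\<lambda>_. 0) t (\<lambda>_. 0)"
proof -
  interpret prob_space M by fact
  show ?thesis unfolding wiener_integral_def by simp
qed

lemma sq3_le: "((x::real) + y + z)\<^sup>2 \<le> 3 * x\<^sup>2 + 3 * y\<^sup>2 + 3 * z\<^sup>2"
proof -
  have "0 \<le> (x - y)\<^sup>2 + (y - z)\<^sup>2 + (x - z)\<^sup>2" by simp
  then show ?thesis by (simp add: power2_eq_square algebra_simps)
qed

lemma R_diff_bound:
  assumes BM: "std_brownian_motion M W" and t: "0 \<le> t"
    and wZ: "wiener_integral M W g t Z" and wZ': "wiener_integral M W g' t Z'"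
    and gG: "\<And>s. s \<in> {0..t} \<Longrightarrow> \<bar>g s - g' s\<bar> \<le> G"
    and R: "AE \<omega> in M. R \<omega> = \<sigma> * Z \<omega>" and R': "AE \<omega> in M. R' \<omega> = \<sigma> * Z' \<omega>"
  shows "(\<integral>\<^sup>+\<omega>. ennreal ((R \<omega> - R' \<omega>)\<^sup>2) \<partial>M) \<le> ennreal (\<sigma>\<^sup>2 * (G\<^sup>2 * t))"
proof -
  have "(\<integral>\<^sup>+\<omega>. ennreal ((R \<omega> - R' \<omega>)\<^sup>2) \<partial>M) = (\<integral>\<^sup>+\<omega>. ennreal (\<sigma>\<^sup>2) * ennreal ((Z \<omega> - Z' \<omega>)\<^sup>2) \<partial>M)"
    using R R' by (intro nn_integral_cong_AE) (auto simp: ennreal_mult[symmetric] power_mult_distrib right_diff_distrib[symmetric])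
  also have "\<dots> = ennreal (\<sigma>\<^sup>2) * (\<integral>\<^sup>+\<omega>. ennreal ((Z \<omega> - Z' \<omega>)\<^sup>2) \<partial>M)"
  proof (rule nn_integral_cmult)
    show "(\<lambda>\<omega>. ennreal ((Z \<omega> - Z' \<omega>)\<^sup>2)) \<in> borel_measurable M"
    proof -
      have [measurable]: "Z \<in> borel_measurable M" "Z' \<in> borel_measurable M"
        using wZ wZ' unfolding wiener_integral_def by auto
      show ?thesis by measurable
    qed
  qed
  also have "\<dots> \<le> ennreal (\<sigma>\<^sup>2) * ennreal (G\<^sup>2 * t)"
    by (intro mult_left_mono wiener_diff_bound[OF BM t wZ wZ' gG]) auto
  also have "\<dots> = ennreal (\<sigma>\<^sup>2 * (G\<^sup>2 * t))" using t by (simp add: ennreal_mult)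
  finally show ?thesis .
qed

definition Uabs :: "real \<Rightarrow> (real \<Rightarrow> 'a \<Rightarrow> real) \<Rightarrow> 'a \<Rightarrow> real" where
  "Uabs T u \<omega> = (\<integral>s. indicator {0..T} s * \<bar>u (clampT T s) \<omega>\<bar> \<partial>lborel)"

lemma U_facts:
  fixes u :: "real \<Rightarrow> 'a \<Rightarrow> real"
  assumes P: "prob_space M" and T: "0 \<le> T" and uL: "u \<in> L2a M W T"
  shows U_meas: "Uabs T u \<in> borel_measurable M"
    and U_AE: "AE \<omega> in M. (\<lambda>s. u (clampT T s) \<omega>) \<in> borel_measurable lborel \<and>
                  set_integrable lborel {0..T} (\<lambda>s. u (clampT T s) \<omega>)"
    and U_sq: "(\<integral>\<^sup>+\<omega>. ennreal ((Uabs T u \<omega>)\<^sup>2) \<partial>M) \<le> ennreal (T * L2norm_sq M T u)"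
proof -
  note um[measurable] = u_meas[OF P T uL]
  show Um: "Uabs T u \<in> borel_measurable M" unfolding Uabs_def
  proof (rule lborel.borel_measurable_lebesgue_integral)
    have "(\<lambda>p. indicator {0..T} (snd p) * \<bar>u (clampT T (snd p)) (fst p)\<bar>) \<in> borel_measurable (M \<Otimes>\<^sub>M lborel)"
      by measurable
    then show "(\<lambda>(x, y). indicator {0..T} y * \<bar>u (clampT T y) x\<bar>) \<in> borel_measurable (M \<Otimes>\<^sub>M lborel)"
      by (simp add: case_prod_beta')
  qed
  have pw: "AE \<omega> in M. (\<lambda>s. u (clampT T s) \<omega>) \<in> borel_measurable lborel \<and>
                  set_integrable lborel {0..T} (\<lambda>s. u (clampT T s) \<omega>) \<and>
                  ennreal ((Uabs T u \<omega>)\<^sup>2) \<le> ennreal T * (\<integral>\<^sup>+ s. ennreal ((u (clampT T s) \<omega>)\<^sup>2) * indicator {0..T} s \<partial>lborel)"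
    using u_AE[OF P T uL] AE_space
  proof eventually_elim
    case (elim \<omega>)
    have m\<omega>: "(\<lambda>s. u (clampT T s) \<omega>) \<in> borel_measurable lborel"
      using measurable_Pair2[OF um \<open>\<omega> \<in> space M\<close>] by simp
    then have ma: "(\<lambda>s. \<bar>u (clampT T s) \<omega>\<bar>) \<in> borel_measurable lborel" by measurable
    have fin: "(\<integral>\<^sup>+ s. ennreal ((\<bar>u (clampT T s) \<omega>\<bar>)\<^sup>2) * indicator {0..T} s \<partial>lborel) < \<infinity>"
      using elim(1) by simp
    note cs = cs_interval[OF ma _ T fin]
    have si: "set_integrable lborel {0..T} (\<lambda>s. u (clampT T s) \<omega>)"
      using cs(1) set_integrable_abs_iff'[OF m\<omega>] by simp
    have "(\<integral>s\<in>{0..T}. \<bar>u (clampT T s) \<omega>\<bar> \<partial>lborel) = Uabs T u \<omega>"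
      unfolding Uabs_def set_lebesgue_integral_def by simp
    then show ?case using m\<omega> si cs(2) by simp
  qed
  then show "AE \<omega> in M. (\<lambda>s. u (clampT T s) \<omega>) \<in> borel_measurable lborel \<and>
                  set_integrable lborel {0..T} (\<lambda>s. u (clampT T s) \<omega>)" by auto
  have "(\<integral>\<^sup>+\<omega>. ennreal ((Uabs T u \<omega>)\<^sup>2) \<partial>M)
      \<le> (\<integral>\<^sup>+\<omega>. ennreal T * (\<integral>\<^sup>+ s. ennreal ((u (clampT T s) \<omega>)\<^sup>2) * indicator {0..T} s \<partial>lborel) \<partial>M)"
    using pw by (intro nn_integral_mono_AE) auto
  also have "\<dots> = ennreal T * ennreal (L2norm_sq M T u)"
  proof (subst nn_integral_cmult)
    show "(\<lambda>\<omega>. \<integral>\<^sup>+ s. ennreal ((u (clampT T s) \<omega>)\<^sup>2) * indicator {0..T} s \<partial>lborel) \<in> borel_measurable M"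
    proof (rule lborel.borel_measurable_nn_integral)
      have "(\<lambda>p. ennreal ((u (clampT T (snd p)) (fst p))\<^sup>2) * indicator {0..T} (snd p)) \<in> borel_measurable (M \<Otimes>\<^sub>M lborel)"
        by measurable
      then show "case_prod (\<lambda>\<omega> s. ennreal ((u (clampT T s) \<omega>)\<^sup>2) * indicator {0..T} s) \<in> borel_measurable (M \<Otimes>\<^sub>M lborel)"
        by (simp add: case_prod_beta')
    qed
  qed (simp add: u_nn[OF P T uL])
  also have "\<dots> = ennreal (T * L2norm_sq M T u)" using T u_L2nn[OF P T uL] by (simp add: ennreal_mult)
  finally show "(\<integral>\<^sup>+\<omega>. ennreal ((Uabs T u \<omega>)\<^sup>2) \<partial>M) \<le> ennreal (T * L2norm_sq M T u)" .
qed

lemma enn_lin3: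
  assumes "0 \<le> c0" "0 \<le> p" "0 \<le> q" "0 \<le> x" "0 \<le> y"
  shows "ennreal (c0 + p * x + q * y) = ennreal c0 + ennreal p * ennreal x + ennreal q * ennreal y"
  using assms by (simp add: ennreal_plus ennreal_mult zero_le_mult_iff)

lemma nn_integral_lin3:
  assumes P: "prob_space M" and f: "f \<in> borel_measurable M" and g: "g \<in> borel_measurable M"
  shows "(\<integral>\<^sup>+\<omega>. ennreal c0 + ennreal p * f \<omega> + ennreal q * g \<omega> \<partial>M)
       = ennreal c0 + ennreal p * (\<integral>\<^sup>+\<omega>. f \<omega> \<partial>M) + ennreal q * (\<integral>\<^sup>+\<omega>. g \<omega> \<partial>M)"
proof -
  interpret prob_space M by (rule P)
  show ?thesis using f g
    by (simp add: nn_integral_add nn_integral_cmult emeasure_space_1)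
qed

lemma X_bound:
  fixes u X :: "real \<Rightarrow> 'a \<Rightarrow> real" and k :: "real \<Rightarrow> real"
  assumes BM: "std_brownian_motion M W" and T: "0 < T" and \<alpha>: "0 \<le> \<alpha>" and \<beta>: "0 \<le> \<beta>"
    and uL: "u \<in> L2a M W T" and sol: "volterra_solution M W T X0 \<alpha> \<beta> \<sigma> k u X"
    and kc: "continuous_on {0..T} k" and kb: "\<And>x. x \<in> {0..T} \<Longrightarrow> \<bar>k x\<bar> \<le> B"
    and t: "t \<in> {0..T}"
  shows "(\<integral>\<^sup>+\<omega>. ennreal ((X t \<omega>)\<^sup>2) \<partial>M)
     \<le> ennreal ((2 + 2 * (\<beta> * B * exp (\<beta> * B * T))\<^sup>2 * T\<^sup>2) *
                (3 * X0\<^sup>2 + 3 * (\<alpha> * B)\<^sup>2 * (T * L2norm_sq M T u) + 3 * (\<sigma>\<^sup>2 * (B\<^sup>2 * T))))"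
proof -
  have P: "prob_space M" using BM unfolding std_brownian_motion_def by blast
  interpret prob_space M by (rule P)
  have T0: "0 \<le> T" using T by simp
  have B0: "0 \<le> B" using kb[of 0] T by force
  have kcb: "\<bar>k (clampT T x)\<bar> \<le> B" for x using kb clampT_in[OF T0] by blast
  note kcm = kc_meas[OF kc T0]
  note um[measurable] = u_meas[OF P T0 uL]
  note Xm[measurable] = X_meas[OF P T uL sol kc]
  note Im[measurable] = I_meas[OF P T uL sol kc]
  note Um[measurable] = U_meas[OF P T0 uL]
  have L0: "0 \<le> L2norm_sq M T u" by (rule u_L2nn[OF P T0 uL])
  define Y where "Y \<omega> s = X (clampT T s) \<omega>" for \<omega> s
  define R where "R \<omega> s = Y \<omega> s - X0 - Ipath T \<alpha> \<beta> k u X \<omega> s" for \<omega> s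
  define a where "a \<omega> s = \<bar>X0\<bar> + \<alpha> * B * Uabs T u \<omega> + \<bar>R \<omega> s\<bar>" for \<omega> s
  have mY: "(\<lambda>(\<omega>, s). Y \<omega> s) \<in> borel_measurable (M \<Otimes>\<^sub>M lborel)"
    unfolding Y_def using Xm by (simp add: case_prod_beta')
  have mR: "(\<lambda>(\<omega>, s). R \<omega> s) \<in> borel_measurable (M \<Otimes>\<^sub>M lborel)"
  proof -
    have "(\<lambda>p. X (clampT T (snd p)) (fst p) - X0 - Ipath T \<alpha> \<beta> k u X (fst p) (snd p)) \<in> borel_measurable (M \<Otimes>\<^sub>M lborel)"
      by measurable
    then show ?thesis unfolding R_def Y_def by (simp add: case_prod_beta')
  qed
  have ma: "(\<lambda>(\<omega>, s). a \<omega> s) \<in> borel_measurable (M \<Otimes>\<^sub>M lborel)"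
  proof -
    have [measurable]: "(\<lambda>p. R (fst p) (snd p)) \<in> borel_measurable (M \<Otimes>\<^sub>M lborel)"
      using mR by (simp add: case_prod_beta')
    have "(\<lambda>p. \<bar>X0\<bar> + \<alpha> * B * Uabs T u (fst p) + \<bar>R (fst p) (snd p)\<bar>) \<in> borel_measurable (M \<Otimes>\<^sub>M lborel)"
      by measurable
    then show ?thesis unfolding a_def by (simp add: case_prod_beta')
  qed
  have a0: "0 \<le> a \<omega> s" for \<omega> s
  proof -
    have "0 \<le> Uabs T u \<omega>" unfolding Uabs_def by (intro integral_nonneg_AE) auto
    then show ?thesis unfolding a_def using \<alpha> B0 by simp
  qed
  have AEY: "AE \<omega> in M. set_integrable lborel {0..T} (Y \<omega>) \<and>
        (\<forall>t\<in>{0..T}. \<bar>Y \<omega> t\<bar> \<le> a \<omega> t + \<beta> * B * (\<integral>s\<in>{0..t}. \<bar>Y \<omega> s\<bar> \<partial>lborel))"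
    using X_AE[OF P T uL sol kc] U_AE[OF P T0 uL] AE_space
  proof eventually_elim
    case (elim \<omega>)
    have xm: "(\<lambda>s. X (clampT T s) \<omega>) \<in> borel_measurable lborel"
      using measurable_Pair2[OF Xm \<open>\<omega> \<in> space M\<close>] by simp
    have xi: "set_integrable lborel {0..T} (\<lambda>s. X (clampT T s) \<omega>)" using elim(1) .
    have um': "(\<lambda>s. u (clampT T s) \<omega>) \<in> borel_measurable lborel"
      and ui: "set_integrable lborel {0..T} (\<lambda>s. u (clampT T s) \<omega>)" using elim(2) by auto
    have "\<bar>Y \<omega> t\<bar> \<le> a \<omega> t + \<beta> * B * (\<integral>s\<in>{0..t}. \<bar>Y \<omega> s\<bar> \<partial>lborel)" if t: "t \<in> {0..T}" for t
    proof -
      have Ib: "\<bar>Ipath T \<alpha> \<beta> k u X \<omega> t\<bar> \<le> B * (\<alpha> * Uabs T u \<omega> + \<beta> * (\<integral>s\<in>{0..t}. \<bar>Y \<omega> s\<bar> \<partial>lborel))"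
        using Ipath_bound[OF kcm kcb um' xm ui xi t \<alpha> \<beta>]
        unfolding Ipath_def Uabs_def Y_def set_lebesgue_integral_def by simp
      have "Y \<omega> t = X0 + Ipath T \<alpha> \<beta> k u X \<omega> t + R \<omega> t" unfolding R_def by simp
      then have "\<bar>Y \<omega> t\<bar> \<le> \<bar>X0\<bar> + \<bar>Ipath T \<alpha> \<beta> k u X \<omega> t\<bar> + \<bar>R \<omega> t\<bar>" by linarith
      then show ?thesis using Ib unfolding a_def by (simp add: algebra_simps)
    qed
    then show ?case using xi unfolding Y_def by auto
  qed
  define A where "A = 3 * X0\<^sup>2 + 3 * (\<alpha> * B)\<^sup>2 * (T * L2norm_sq M T u) + 3 * (\<sigma>\<^sup>2 * (B\<^sup>2 * T))"
  have A0: "0 \<le> A" unfolding A_def using T0 L0 by simp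
  have bnd: "(\<integral>\<^sup>+\<omega>. ennreal ((a \<omega> s)\<^sup>2) \<partial>M) \<le> ennreal A" if s: "s \<in> {0..T}" for s
  proof -
    have Rb: "(\<integral>\<^sup>+\<omega>. ennreal ((R \<omega> s)\<^sup>2) \<partial>M) \<le> ennreal (\<sigma>\<^sup>2 * (B\<^sup>2 * T))"
    proof -
      obtain Z where Z: "wiener_integral M W (\<lambda>r. k (s - r)) s Z"
        and ZAE: "AE \<omega> in M. X s \<omega> = X0 + Ipath T \<alpha> \<beta> k u X \<omega> s + \<sigma> * Z \<omega>"
        using X_W[OF P T uL sol kc s] by blast
      have RAE: "AE \<omega> in M. R \<omega> s = \<sigma> * Z \<omega>"
        using ZAE by eventually_elim (use s in \<open>auto simp: R_def Y_def clampT_id\<close>)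
      have "(\<integral>\<^sup>+\<omega>. ennreal ((R \<omega> s - 0)\<^sup>2) \<partial>M) \<le> ennreal (\<sigma>\<^sup>2 * (B\<^sup>2 * s))"
      proof (rule R_diff_bound[OF BM _ Z wiener_zero[OF P] _ RAE])
        show "0 \<le> s" using s by simp
        fix r assume "r \<in> {0..s}"
        then show "\<bar>k (s - r) - 0\<bar> \<le> B" using kb s by auto
      qed simp
      also have "\<dots> \<le> ennreal (\<sigma>\<^sup>2 * (B\<^sup>2 * T))"
        using s by (intro ennreal_leI mult_left_mono) auto
      finally show ?thesis by simp
    qed
    have pw: "ennreal ((a \<omega> s)\<^sup>2) \<le> ennreal (3 * X0\<^sup>2) + ennreal (3 * (\<alpha> * B)\<^sup>2) * ennreal ((Uabs T u \<omega>)\<^sup>2)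
              + ennreal 3 * ennreal ((R \<omega> s)\<^sup>2)" for \<omega>
    proof -
      have "(a \<omega> s)\<^sup>2 \<le> 3 * \<bar>X0\<bar>\<^sup>2 + 3 * (\<alpha> * B * Uabs T u \<omega>)\<^sup>2 + 3 * \<bar>R \<omega> s\<bar>\<^sup>2"
        unfolding a_def by (rule sq3_le)
      also have "\<dots> = 3 * X0\<^sup>2 + 3 * (\<alpha> * B)\<^sup>2 * (Uabs T u \<omega>)\<^sup>2 + 3 * (R \<omega> s)\<^sup>2"
        by (simp add: power_mult_distrib)
      finally have "ennreal ((a \<omega> s)\<^sup>2) \<le> ennreal (3 * X0\<^sup>2 + 3 * (\<alpha> * B)\<^sup>2 * (Uabs T u \<omega>)\<^sup>2 + 3 * (R \<omega> s)\<^sup>2)"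
        by (rule ennreal_leI)
      also have "\<dots> = ennreal (3 * X0\<^sup>2) + ennreal (3 * (\<alpha> * B)\<^sup>2) * ennreal ((Uabs T u \<omega>)\<^sup>2) + ennreal 3 * ennreal ((R \<omega> s)\<^sup>2)"
        by (rule enn_lin3) auto
      finally show ?thesis .
    qed
    have mRs: "(\<lambda>\<omega>. ennreal ((R \<omega> s)\<^sup>2)) \<in> borel_measurable M"
    proof -
      have "(\<lambda>\<omega>. R \<omega> s) \<in> borel_measurable M"
        using measurable_Pair1[OF mR, of s] by simp
      then show ?thesis by measurable
    qed
    have "(\<integral>\<^sup>+\<omega>. ennreal ((a \<omega> s)\<^sup>2) \<partial>M) \<le> (\<integral>\<^sup>+\<omega>. ennreal (3 * X0\<^sup>2) + ennreal (3 * (\<alpha> * B)\<^sup>2) * ennreal ((Uabs T u \<omega>)\<^sup>2)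
              + ennreal 3 * ennreal ((R \<omega> s)\<^sup>2) \<partial>M)"
      by (intro nn_integral_mono pw)
    also have "\<dots> = ennreal (3 * X0\<^sup>2) + ennreal (3 * (\<alpha> * B)\<^sup>2) * (\<integral>\<^sup>+\<omega>. ennreal ((Uabs T u \<omega>)\<^sup>2) \<partial>M)
              + ennreal 3 * (\<integral>\<^sup>+\<omega>. ennreal ((R \<omega> s)\<^sup>2) \<partial>M)"
      by (rule nn_integral_lin3[OF P _ mRs]) measurable
    also have "\<dots> \<le> ennreal (3 * X0\<^sup>2) + ennreal (3 * (\<alpha> * B)\<^sup>2) * ennreal (T * L2norm_sq M T u)
              + ennreal 3 * ennreal (\<sigma>\<^sup>2 * (B\<^sup>2 * T))"
      by (intro add_mono mult_left_mono U_sq[OF P T0 uL] Rb order_refl) auto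
    also have "\<dots> = ennreal A"
      unfolding A_def by (rule enn_lin3[symmetric]) (use T0 L0 in auto)
    finally show ?thesis .
  qed
  have c0: "0 \<le> \<beta> * B" using \<beta> B0 by simp
  have "(\<integral>\<^sup>+\<omega>. ennreal ((Y \<omega> t)\<^sup>2) \<partial>M) \<le> ennreal ((2 + 2 * (\<beta> * B * exp (\<beta> * B * T))\<^sup>2 * T\<^sup>2) * A)"
    by (rule gronwall_expect[OF P T0 c0 A0 mY ma a0 AEY bnd t])
  moreover have "Y \<omega> t = X t \<omega>" for \<omega> unfolding Y_def using t by (simp add: clampT_id)
  ultimately show ?thesis unfolding A_def by simp
qed

lemma V_sq:
  fixes X :: "real \<Rightarrow> 'a \<Rightarrow> real"
  assumes P: "prob_space M" and T': "0 < T"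
    and Xm: "(\<lambda>p. X (clampT T (snd p)) (fst p)) \<in> borel_measurable (M \<Otimes>\<^sub>M lborel)"
    and XB: "\<And>s. s \<in> {0..T} \<Longrightarrow> (\<integral>\<^sup>+\<omega>. ennreal ((X s \<omega>)\<^sup>2) \<partial>M) \<le> ennreal C"
    and C: "0 \<le> C"
  shows "Uabs T X \<in> borel_measurable M"
    and "(\<integral>\<^sup>+\<omega>. ennreal ((Uabs T X \<omega>)\<^sup>2) \<partial>M) \<le> ennreal (T * (T * C))"
proof -
  have T: "0 \<le> T" using T' by simp
  interpret prob_space M by (rule P)
  interpret pair_sigma_finite M lborel by (rule pair_sf_M_lborel[OF P])
  note Xm[measurable]
  show Um: "Uabs T X \<in> borel_measurable M" unfolding Uabs_def
  proof (rule lborel.borel_measurable_lebesgue_integral)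
    have "(\<lambda>p. indicator {0..T} (snd p) * \<bar>X (clampT T (snd p)) (fst p)\<bar>) \<in> borel_measurable (M \<Otimes>\<^sub>M lborel)"
      by measurable
    then show "(\<lambda>(x, y). indicator {0..T} y * \<bar>X (clampT T y) x\<bar>) \<in> borel_measurable (M \<Otimes>\<^sub>M lborel)"
      by (simp add: case_prod_beta')
  qed
  define Q where "Q \<omega> = (\<integral>\<^sup>+ s. ennreal ((X (clampT T s) \<omega>)\<^sup>2) * indicator {0..T} s \<partial>lborel)" for \<omega>
  have m2: "(\<lambda>(\<omega>, s). ennreal ((X (clampT T s) \<omega>)\<^sup>2) * indicator {0..T} s) \<in> borel_measurable (M \<Otimes>\<^sub>M lborel)"
  proof -
    have "(\<lambda>p. ennreal ((X (clampT T (snd p)) (fst p))\<^sup>2) * indicator {0..T} (snd p)) \<in> borel_measurable (M \<Otimes>\<^sub>M lborel)"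
      by measurable
    then show ?thesis by (simp add: case_prod_beta')
  qed
  have pw: "ennreal ((Uabs T X \<omega>)\<^sup>2) \<le> ennreal T * Q \<omega>" if \<omega>: "\<omega> \<in> space M" for \<omega>
  proof (cases "Q \<omega> < \<infinity>")
    case True
    have m\<omega>: "(\<lambda>s. X (clampT T s) \<omega>) \<in> borel_measurable lborel"
      using measurable_Pair2[OF Xm \<omega>] by simp
    then have ma: "(\<lambda>s. \<bar>X (clampT T s) \<omega>\<bar>) \<in> borel_measurable lborel" by measurable
    have fin: "(\<integral>\<^sup>+ s. ennreal ((\<bar>X (clampT T s) \<omega>\<bar>)\<^sup>2) * indicator {0..T} s \<partial>lborel) < \<infinity>"
      using True unfolding Q_def by simp
    note cs = cs_interval[OF ma _ T fin]
    have "(\<integral>s\<in>{0..T}. \<bar>X (clampT T s) \<omega>\<bar> \<partial>lborel) = Uabs T X \<omega>"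
      unfolding Uabs_def set_lebesgue_integral_def by simp
    then show ?thesis using cs(2) unfolding Q_def by simp
  next
    case False
    then have "Q \<omega> = \<infinity>" by (simp add: less_top[symmetric])
    then show ?thesis using T' by (simp add: ennreal_mult_top)
  qed
  have "(\<integral>\<^sup>+\<omega>. ennreal ((Uabs T X \<omega>)\<^sup>2) \<partial>M) \<le> (\<integral>\<^sup>+\<omega>. ennreal T * Q \<omega> \<partial>M)"
    by (intro nn_integral_mono pw)
  also have "\<dots> = ennreal T * (\<integral>\<^sup>+\<omega>. Q \<omega> \<partial>M)"
  proof (rule nn_integral_cmult)
    show "Q \<in> borel_measurable M" unfolding Q_def
      using lborel.borel_measurable_nn_integral[OF m2] by simp
  qed
  also have "(\<integral>\<^sup>+\<omega>. Q \<omega> \<partial>M) \<le> ennreal (T * C)"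
  proof -
    have "(\<integral>\<^sup>+\<omega>. Q \<omega> \<partial>M) = (\<integral>\<^sup>+ s. \<integral>\<^sup>+\<omega>. ennreal ((X (clampT T s) \<omega>)\<^sup>2) * indicator {0..T} s \<partial>M \<partial>lborel)"
      unfolding Q_def using Fubini'[OF m2] by simp
    also have "\<dots> = (\<integral>\<^sup>+ s. (\<integral>\<^sup>+\<omega>. ennreal ((X (clampT T s) \<omega>)\<^sup>2) \<partial>M) * indicator {0..T} s \<partial>lborel)"
    proof (intro nn_integral_cong nn_integral_multc)
      fix s :: real
      show "(\<lambda>\<omega>. ennreal ((X (clampT T s) \<omega>)\<^sup>2)) \<in> borel_measurable M"
      proof -
        have "X (clampT T s) \<in> borel_measurable M"
          using measurable_Pair1[OF Xm, of s] by simp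
        then show ?thesis by measurable
      qed
    qed
    also have "\<dots> \<le> (\<integral>\<^sup>+ s. ennreal C * indicator {0..T} s \<partial>lborel)"
      by (intro nn_integral_mono) (auto simp: XB clampT_id split: split_indicator)
    also have "\<dots> = ennreal (T * C)" using T C
      by (simp add: nn_integral_cmult_indicator ennreal_mult mult.commute)
    finally show ?thesis .
  qed
  finally show "(\<integral>\<^sup>+\<omega>. ennreal ((Uabs T X \<omega>)\<^sup>2) \<partial>M) \<le> ennreal (T * (T * C))"
    using T C by (simp add: ennreal_mult mult_left_mono)
qed

lemma enn_lin4:
  assumes "0 \<le> p1" "0 \<le> p2" "0 \<le> p3" "0 \<le> x1" "0 \<le> x2" "0 \<le> x3"
  shows "ennreal 0 + ennreal p1 * ennreal x1 + ennreal p2 * ennreal x2 + ennreal p3 * ennreal x3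
       = ennreal (p1 * x1 + p2 * x2 + p3 * x3)"
  using assms by (simp add: ennreal_plus ennreal_mult zero_le_mult_iff)

lemma D_bound:
  fixes u X Xn :: "real \<Rightarrow> 'a \<Rightarrow> real" and k kn :: "real \<Rightarrow> real"
  assumes BM: "std_brownian_motion M W" and T: "0 < T" and \<alpha>: "0 \<le> \<alpha>" and \<beta>: "0 \<le> \<beta>"
    and uL: "u \<in> L2a M W T" and sol: "volterra_solution M W T X0 \<alpha> \<beta> \<sigma> k u X"
    and soln: "volterra_solution M W T X0 \<alpha> \<beta> \<sigma> kn u Xn"
    and kc: "continuous_on {0..T} k" and knc: "continuous_on {0..T} kn"
    and kb: "\<And>x. x \<in> {0..T} \<Longrightarrow> \<bar>k x\<bar> \<le> B" and knb: "\<And>x. x \<in> {0..T} \<Longrightarrow> \<bar>kn x\<bar> \<le> B"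
    and kd: "\<And>x. x \<in> {0..T} \<Longrightarrow> \<bar>k x - kn x\<bar> \<le> \<delta>"
    and XB: "\<And>s. s \<in> {0..T} \<Longrightarrow> (\<integral>\<^sup>+\<omega>. ennreal ((X s \<omega>)\<^sup>2) \<partial>M) \<le> ennreal CX" and CX: "0 \<le> CX"
    and t: "t \<in> {0..T}"
  shows "(\<integral>\<^sup>+\<omega>. ennreal ((X t \<omega> - Xn t \<omega>)\<^sup>2) \<partial>M)
     \<le> ennreal ((2 + 2 * (\<beta> * B * exp (\<beta> * B * T))\<^sup>2 * T\<^sup>2) *
                (4 * (\<delta> * \<alpha>)\<^sup>2 * (T * L2norm_sq M T u) + 4 * (\<delta> * \<beta>)\<^sup>2 * (T * (T * CX)) + 2 * (\<sigma>\<^sup>2 * (\<delta>\<^sup>2 * T))))"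
proof -
  have P: "prob_space M" using BM unfolding std_brownian_motion_def by blast
  interpret prob_space M by (rule P)
  have T0: "0 \<le> T" using T by simp
  have B0: "0 \<le> B" using kb[of 0] T by force
  have d0: "0 \<le> \<delta>" using kd[of 0] T by force
  have kcb: "\<bar>k (clampT T x)\<bar> \<le> B" for x using kb clampT_in[OF T0] by blast
  have kncb: "\<bar>kn (clampT T x)\<bar> \<le> B" for x using knb clampT_in[OF T0] by blast
  have kdb: "\<bar>k (clampT T x) - kn (clampT T x)\<bar> \<le> \<delta>" for x using kd clampT_in[OF T0] by blast
  note kcm = kc_meas[OF kc T0]
  note kncm = kc_meas[OF knc T0]
  note um[measurable] = u_meas[OF P T0 uL]
  note Xm[measurable] = X_meas[OF P T uL sol kc]
  note Im[measurable] = I_meas[OF P T uL sol kc]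
  note Xnm[measurable] = X_meas[OF P T uL soln knc]
  note Inm[measurable] = I_meas[OF P T uL soln knc]
  note Um[measurable] = U_meas[OF P T0 uL]
  note Vm[measurable] = V_sq(1)[OF P T Xm XB CX]
  have L0: "0 \<le> L2norm_sq M T u" by (rule u_L2nn[OF P T0 uL])
  define Y where "Y \<omega> s = X (clampT T s) \<omega> - Xn (clampT T s) \<omega>" for \<omega> s
  define R where "R \<omega> s = X (clampT T s) \<omega> - X0 - Ipath T \<alpha> \<beta> k u X \<omega> s" for \<omega> s
  define Rn where "Rn \<omega> s = Xn (clampT T s) \<omega> - X0 - Ipath T \<alpha> \<beta> kn u Xn \<omega> s" for \<omega> s
  define a where "a \<omega> s = \<delta> * (\<alpha> * Uabs T u \<omega> + \<beta> * Uabs T X \<omega>) + \<bar>R \<omega> s - Rn \<omega> s\<bar>" for \<omega> s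
  have mY: "(\<lambda>(\<omega>, s). Y \<omega> s) \<in> borel_measurable (M \<Otimes>\<^sub>M lborel)"
  proof -
    have "(\<lambda>p. X (clampT T (snd p)) (fst p) - Xn (clampT T (snd p)) (fst p)) \<in> borel_measurable (M \<Otimes>\<^sub>M lborel)"
      by measurable
    then show ?thesis unfolding Y_def by (simp add: case_prod_beta')
  qed
  have mRR[measurable]: "(\<lambda>p. R (fst p) (snd p) - Rn (fst p) (snd p)) \<in> borel_measurable (M \<Otimes>\<^sub>M lborel)"
    unfolding R_def Rn_def by measurable
  have ma: "(\<lambda>(\<omega>, s). a \<omega> s) \<in> borel_measurable (M \<Otimes>\<^sub>M lborel)"
  proof -
    have "(\<lambda>p. \<delta> * (\<alpha> * Uabs T u (fst p) + \<beta> * Uabs T X (fst p)) + \<bar>R (fst p) (snd p) - Rn (fst p) (snd p)\<bar>) \<in> borel_measurable (M \<Otimes>\<^sub>M lborel)"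
      by measurable
    then show ?thesis unfolding a_def by (simp add: case_prod_beta')
  qed
  have Unn: "0 \<le> Uabs T f \<omega>" for f :: "real \<Rightarrow> 'a \<Rightarrow> real" and \<omega>
    unfolding Uabs_def by (intro integral_nonneg_AE) auto
  have a0: "0 \<le> a \<omega> s" for \<omega> s
    unfolding a_def using \<alpha> \<beta> d0 Unn[of u \<omega>] Unn[of X \<omega>] by simp
  have AEY: "AE \<omega> in M. set_integrable lborel {0..T} (Y \<omega>) \<and>
        (\<forall>t\<in>{0..T}. \<bar>Y \<omega> t\<bar> \<le> a \<omega> t + \<beta> * B * (\<integral>s\<in>{0..t}. \<bar>Y \<omega> s\<bar> \<partial>lborel))"
    using X_AE[OF P T uL sol kc] X_AE[OF P T uL soln knc] U_AE[OF P T0 uL] AE_space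
  proof eventually_elim
    case (elim \<omega>)
    have xm: "(\<lambda>s. X (clampT T s) \<omega>) \<in> borel_measurable lborel"
      using measurable_Pair2[OF Xm \<open>\<omega> \<in> space M\<close>] by simp
    have ym: "(\<lambda>s. Xn (clampT T s) \<omega>) \<in> borel_measurable lborel"
      using measurable_Pair2[OF Xnm \<open>\<omega> \<in> space M\<close>] by simp
    have xi: "set_integrable lborel {0..T} (\<lambda>s. X (clampT T s) \<omega>)" using elim(1) .
    have yi: "set_integrable lborel {0..T} (\<lambda>s. Xn (clampT T s) \<omega>)" using elim(2) .
    have um': "(\<lambda>s. u (clampT T s) \<omega>) \<in> borel_measurable lborel"
      and ui: "set_integrable lborel {0..T} (\<lambda>s. u (clampT T s) \<omega>)" using elim(3) by auto
    have "\<bar>Y \<omega> t\<bar> \<le> a \<omega> t + \<beta> * B * (\<integral>s\<in>{0..t}. \<bar>Y \<omega> s\<bar> \<partial>lborel)" if t: "t \<in> {0..T}" for t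
    proof -
      have Ib: "\<bar>Ipath T \<alpha> \<beta> k u X \<omega> t - Ipath T \<alpha> \<beta> kn u Xn \<omega> t\<bar>
          \<le> \<delta> * (\<alpha> * Uabs T u \<omega> + \<beta> * Uabs T X \<omega>) + \<beta> * B * (\<integral>s\<in>{0..t}. \<bar>Y \<omega> s\<bar> \<partial>lborel)"
        using Ipath_diff_bound[OF kcm kncm kcb kncb kdb um' xm ym ui xi yi t \<alpha> \<beta>]
        unfolding Ipath_def Uabs_def Y_def set_lebesgue_integral_def by simp
      have "Y \<omega> t = (Ipath T \<alpha> \<beta> k u X \<omega> t - Ipath T \<alpha> \<beta> kn u Xn \<omega> t) + (R \<omega> t - Rn \<omega> t)"
        unfolding R_def Rn_def Y_def by simp
      then have "\<bar>Y \<omega> t\<bar> \<le> \<bar>Ipath T \<alpha> \<beta> k u X \<omega> t - Ipath T \<alpha> \<beta> kn u Xn \<omega> t\<bar> + \<bar>R \<omega> t - Rn \<omega> t\<bar>"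
        by linarith
      then show ?thesis using Ib unfolding a_def by (simp add: algebra_simps)
    qed
    moreover have "set_integrable lborel {0..T} (Y \<omega>)"
      unfolding Y_def by (rule set_integral_diff(1)[OF xi yi])
    ultimately show ?case by auto
  qed
  define A where "A = 4 * (\<delta> * \<alpha>)\<^sup>2 * (T * L2norm_sq M T u) + 4 * (\<delta> * \<beta>)\<^sup>2 * (T * (T * CX)) + 2 * (\<sigma>\<^sup>2 * (\<delta>\<^sup>2 * T))"
  have A0: "0 \<le> A" unfolding A_def using T0 L0 CX by simp
  have bnd: "(\<integral>\<^sup>+\<omega>. ennreal ((a \<omega> s)\<^sup>2) \<partial>M) \<le> ennreal A" if s: "s \<in> {0..T}" for s
  proof -
    have Rb: "(\<integral>\<^sup>+\<omega>. ennreal ((R \<omega> s - Rn \<omega> s)\<^sup>2) \<partial>M) \<le> ennreal (\<sigma>\<^sup>2 * (\<delta>\<^sup>2 * T))"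
    proof -
      obtain Z where Z: "wiener_integral M W (\<lambda>r. k (s - r)) s Z"
        and ZAE: "AE \<omega> in M. X s \<omega> = X0 + Ipath T \<alpha> \<beta> k u X \<omega> s + \<sigma> * Z \<omega>"
        using X_W[OF P T uL sol kc s] by blast
      obtain Zn where Zn: "wiener_integral M W (\<lambda>r. kn (s - r)) s Zn"
        and ZnAE: "AE \<omega> in M. Xn s \<omega> = X0 + Ipath T \<alpha> \<beta> kn u Xn \<omega> s + \<sigma> * Zn \<omega>"
        using X_W[OF P T uL soln knc s] by blast
      have RAE: "AE \<omega> in M. R \<omega> s = \<sigma> * Z \<omega>"
        using ZAE by eventually_elim (use s in \<open>auto simp: R_def clampT_id\<close>)
      have RnAE: "AE \<omega> in M. Rn \<omega> s = \<sigma> * Zn \<omega>"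
        using ZnAE by eventually_elim (use s in \<open>auto simp: Rn_def clampT_id\<close>)
      have "(\<integral>\<^sup>+\<omega>. ennreal ((R \<omega> s - Rn \<omega> s)\<^sup>2) \<partial>M) \<le> ennreal (\<sigma>\<^sup>2 * (\<delta>\<^sup>2 * s))"
      proof (rule R_diff_bound[OF BM _ Z Zn _ RAE RnAE])
        show "0 \<le> s" using s by simp
        fix r assume "r \<in> {0..s}"
        then show "\<bar>k (s - r) - kn (s - r)\<bar> \<le> \<delta>" using kd s by auto
      qed
      also have "\<dots> \<le> ennreal (\<sigma>\<^sup>2 * (\<delta>\<^sup>2 * T))"
        using s by (intro ennreal_leI mult_left_mono) auto
      finally show ?thesis .
    qed
    have pw: "ennreal ((a \<omega> s)\<^sup>2) \<le> ennreal 0 + ennreal (4 * (\<delta> * \<alpha>)\<^sup>2) * ennreal ((Uabs T u \<omega>)\<^sup>2)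
              + ennreal (4 * (\<delta> * \<beta>)\<^sup>2) * ennreal ((Uabs T X \<omega>)\<^sup>2) + ennreal 2 * ennreal ((R \<omega> s - Rn \<omega> s)\<^sup>2)" for \<omega>
    proof -
      have "(a \<omega> s)\<^sup>2 \<le> 2 * (\<delta> * (\<alpha> * Uabs T u \<omega> + \<beta> * Uabs T X \<omega>))\<^sup>2 + 2 * \<bar>R \<omega> s - Rn \<omega> s\<bar>\<^sup>2"
        unfolding a_def by (rule sq_sum_le)
      also have "(\<delta> * (\<alpha> * Uabs T u \<omega> + \<beta> * Uabs T X \<omega>))\<^sup>2 = (\<delta> * \<alpha> * Uabs T u \<omega> + \<delta> * \<beta> * Uabs T X \<omega>)\<^sup>2"
        by (simp add: algebra_simps)
      also have "\<dots> \<le> 2 * (\<delta> * \<alpha> * Uabs T u \<omega>)\<^sup>2 + 2 * (\<delta> * \<beta> * Uabs T X \<omega>)\<^sup>2"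
        by (rule sq_sum_le)
      finally have "(a \<omega> s)\<^sup>2 \<le> 0 + 4 * (\<delta> * \<alpha>)\<^sup>2 * (Uabs T u \<omega>)\<^sup>2 + 4 * (\<delta> * \<beta>)\<^sup>2 * (Uabs T X \<omega>)\<^sup>2 + 2 * (R \<omega> s - Rn \<omega> s)\<^sup>2"
        by (simp add: power_mult_distrib)
      then have "ennreal ((a \<omega> s)\<^sup>2) \<le> ennreal (0 + 4 * (\<delta> * \<alpha>)\<^sup>2 * (Uabs T u \<omega>)\<^sup>2 + 4 * (\<delta> * \<beta>)\<^sup>2 * (Uabs T X \<omega>)\<^sup>2 + 2 * (R \<omega> s - Rn \<omega> s)\<^sup>2)"
        by (rule ennreal_leI)
      also have "\<dots> = ennreal 0 + ennreal (4 * (\<delta> * \<alpha>)\<^sup>2) * ennreal ((Uabs T u \<omega>)\<^sup>2)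
              + ennreal (4 * (\<delta> * \<beta>)\<^sup>2) * ennreal ((Uabs T X \<omega>)\<^sup>2) + ennreal 2 * ennreal ((R \<omega> s - Rn \<omega> s)\<^sup>2)"
        by (simp add: ennreal_plus ennreal_mult zero_le_mult_iff add_nonneg_nonneg del: ennreal_0)
      finally show ?thesis .
    qed
    have mRs: "(\<lambda>\<omega>. ennreal ((R \<omega> s - Rn \<omega> s)\<^sup>2)) \<in> borel_measurable M"
    proof -
      have "(\<lambda>\<omega>. R \<omega> s - Rn \<omega> s) \<in> borel_measurable M"
        using measurable_Pair1[OF mRR, of s] by simp
      then show ?thesis by measurable
    qed
    have "(\<integral>\<^sup>+\<omega>. ennreal ((a \<omega> s)\<^sup>2) \<partial>M) \<le> (\<integral>\<^sup>+\<omega>. ennreal 0 + ennreal (4 * (\<delta> * \<alpha>)\<^sup>2) * ennreal ((Uabs T u \<omega>)\<^sup>2)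
              + ennreal (4 * (\<delta> * \<beta>)\<^sup>2) * ennreal ((Uabs T X \<omega>)\<^sup>2) + ennreal 2 * ennreal ((R \<omega> s - Rn \<omega> s)\<^sup>2) \<partial>M)"
      by (intro nn_integral_mono pw)
    also have "\<dots> = ennreal 0 + ennreal (4 * (\<delta> * \<alpha>)\<^sup>2) * (\<integral>\<^sup>+\<omega>. ennreal ((Uabs T u \<omega>)\<^sup>2) \<partial>M)
              + ennreal (4 * (\<delta> * \<beta>)\<^sup>2) * (\<integral>\<^sup>+\<omega>. ennreal ((Uabs T X \<omega>)\<^sup>2) \<partial>M)
              + ennreal 2 * (\<integral>\<^sup>+\<omega>. ennreal ((R \<omega> s - Rn \<omega> s)\<^sup>2) \<partial>M)"
      using mRs by (simp add: nn_integral_add nn_integral_cmult emeasure_space_1 del: ennreal_0)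
    also have "\<dots> \<le> ennreal 0 + ennreal (4 * (\<delta> * \<alpha>)\<^sup>2) * ennreal (T * L2norm_sq M T u)
              + ennreal (4 * (\<delta> * \<beta>)\<^sup>2) * ennreal (T * (T * CX))
              + ennreal 2 * ennreal (\<sigma>\<^sup>2 * (\<delta>\<^sup>2 * T))"
      by (intro add_mono mult_left_mono U_sq[OF P T0 uL] V_sq(2)[OF P T Xm XB CX] Rb order_refl) auto
    also have "\<dots> = ennreal A"
      unfolding A_def by (rule enn_lin4) (use T0 L0 CX in auto)
    finally show ?thesis .
  qed
  have c0: "0 \<le> \<beta> * B" using \<beta> B0 by simp
  have "(\<integral>\<^sup>+\<omega>. ennreal ((Y \<omega> t)\<^sup>2) \<partial>M) \<le> ennreal ((2 + 2 * (\<beta> * B * exp (\<beta> * B * T))\<^sup>2 * T\<^sup>2) * A)"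
    by (rule gronwall_expect[OF P T0 c0 A0 mY ma a0 AEY bnd t])
  moreover have "Y \<omega> t = X t \<omega> - Xn t \<omega>" for \<omega> unfolding Y_def using t by (simp add: clampT_id)
  ultimately show ?thesis unfolding A_def by simp
qed

lemma holder_cont:
  fixes K :: "real \<Rightarrow> real"
  assumes h: "0 < h" and L: "\<And>x y. x \<in> S \<Longrightarrow> y \<in> S \<Longrightarrow> \<bar>K x - K y\<bar> \<le> L * \<bar>x - y\<bar> powr h"
  shows "continuous_on S K"
  unfolding continuous_on_iff
proof (intro ballI allI impI)
  fix x e :: real assume x: "x \<in> S" and e: "0 < e"
  define d where "d = (e / (\<bar>L\<bar> + 1)) powr (1 / h)"
  have d0: "0 < d" unfolding d_def using e by simp
  show "\<exists>d>0. \<forall>x'\<in>S. dist x' x < d \<longrightarrow> dist (K x') (K x) < e"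
  proof (intro exI conjI ballI impI)
    fix x' assume x': "x' \<in> S" and dx: "dist x' x < d"
    have "\<bar>x' - x\<bar> powr h < d powr h"
      using dx h by (intro powr_less_mono2) (auto simp: dist_real_def)
    also have "d powr h = e / (\<bar>L\<bar> + 1)"
      unfolding d_def using e h by (simp add: powr_powr)
    finally have lt: "\<bar>x' - x\<bar> powr h < e / (\<bar>L\<bar> + 1)" .
    have "\<bar>K x' - K x\<bar> \<le> L * \<bar>x' - x\<bar> powr h" using L x x' by blast
    also have "\<dots> \<le> \<bar>L\<bar> * \<bar>x' - x\<bar> powr h" by (intro mult_right_mono) auto
    also have "\<dots> \<le> \<bar>L\<bar> * (e / (\<bar>L\<bar> + 1))" using lt by (intro mult_left_mono) auto
    also have "\<dots> < e"
    proof -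
      have "\<bar>L\<bar> * (e / (\<bar>L\<bar> + 1)) = e * (\<bar>L\<bar> / (\<bar>L\<bar> + 1))" by simp
      also have "\<dots> < e * 1" using e by (intro mult_strict_left_mono) auto
      finally show ?thesis by simp
    qed
    finally show "dist (K x') (K x) < e" by (simp add: dist_real_def)
  qed (rule d0)
qed

lemma bernstein_cont: "continuous_on S (bernstein T K n)"
  unfolding bernstein_def by (intro continuous_intros)

theorem theorem3p1:
  fixes M :: "'a measure" and W :: "real \<Rightarrow> 'a \<Rightarrow> real"
    and T \<alpha> \<beta> \<sigma> X0 h :: real and K :: "real \<Rightarrow> real"
  assumes BM: "std_brownian_motion M W"
    and T: "T > 0" and \<alpha>: "\<alpha> > 0" and \<beta>: "\<beta> > 0" and \<sigma>: "\<sigma> > 0"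
    and h: "0 < h" "h < 1"
    and K: "holder_on h {0..T} K"
  shows "\<exists>C>0. \<forall>n::nat. n \<ge> 1 \<longrightarrow> (\<forall>u \<in> L2a M W T. \<forall>X Xn.
           volterra_solution M W T X0 \<alpha> \<beta> \<sigma> K u X \<longrightarrow>
           volterra_solution M W T X0 \<alpha> \<beta> \<sigma> (bernstein T K n) u Xn \<longrightarrow>
           (\<forall>t\<in>{0..T}. (\<integral>\<^sup>+\<omega>. ennreal ((X t \<omega> - Xn t \<omega>)\<^sup>2) \<partial>M)
              \<le> ennreal (C * (1 + L2norm_sq M T u) * real n powr (- h))))"
proof -
  obtain L where L: "\<And>x y. x \<in> {0..T} \<Longrightarrow> y \<in> {0..T} \<Longrightarrow> \<bar>K x - K y\<bar> \<le> L * \<bar>x - y\<bar> powr h"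
    using K unfolding holder_on_def by blast
  have P: "prob_space M" using BM unfolding std_brownian_motion_def by blast
  define B where "B = \<bar>K 0\<bar> + \<bar>L\<bar> * T powr h"
  have B0: "0 \<le> B" unfolding B_def by simp
  have Kb: "\<bar>K x\<bar> \<le> B" if x: "x \<in> {0..T}" for x
  proof -
    have "\<bar>K x - K 0\<bar> \<le> L * \<bar>x - 0\<bar> powr h" using L[OF x, of 0] T by simp
    also have "\<dots> \<le> \<bar>L\<bar> * \<bar>x - 0\<bar> powr h" by (intro mult_right_mono) auto
    also have "\<dots> \<le> \<bar>L\<bar> * T powr h"
      using x h by (intro mult_left_mono powr_mono2) auto
    finally show ?thesis unfolding B_def by linarith
  qed
  have Kc: "continuous_on {0..T} K" by (rule holder_cont[OF h(1) L])
  define KE where "KE = 2 + 2 * (\<beta> * B * exp (\<beta> * B * T))\<^sup>2 * T\<^sup>2"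
  have KE0: "0 \<le> KE" unfolding KE_def by simp
  define \<Lambda> where "\<Lambda> = 4 * L\<^sup>2 * (T powr h)\<^sup>2"
  define q0 where "q0 = 4 * \<beta>\<^sup>2 * T\<^sup>2 * KE * (3 * X0\<^sup>2 + 3 * \<sigma>\<^sup>2 * B\<^sup>2 * T) + 2 * \<sigma>\<^sup>2 * T"
  define q1 where "q1 = 4 * \<alpha>\<^sup>2 * T + 4 * \<beta>\<^sup>2 * T\<^sup>2 * KE * (3 * \<alpha>\<^sup>2 * B\<^sup>2 * T)"
  have q0: "0 \<le> q0" unfolding q0_def using T KE0 by simp
  have q1: "0 \<le> q1" unfolding q1_def using T KE0 by simp
  define C where "C = \<Lambda> * KE * (q0 + q1) + 1"
  have \<Lambda>0: "0 \<le> \<Lambda>" unfolding \<Lambda>_def by simp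
  have C0: "0 < C" unfolding C_def using \<Lambda>0 KE0 q0 q1 by (simp add: add_nonneg_pos)
  show ?thesis
  proof (intro exI[of _ C] conjI C0 allI impI ballI)
    fix n :: nat and u X Xn t
    assume n: "1 \<le> n" and uL: "u \<in> L2a M W T"
      and sol: "volterra_solution M W T X0 \<alpha> \<beta> \<sigma> K u X"
      and soln: "volterra_solution M W T X0 \<alpha> \<beta> \<sigma> (bernstein T K n) u Xn"
      and t: "t \<in> {0..T}"
    define Lu where "Lu = L2norm_sq M T u"
    have Lu0: "0 \<le> Lu" unfolding Lu_def by (rule u_L2nn[OF P _ uL]) (use T in simp)
    define \<delta> where "\<delta> = 2 * \<bar>L\<bar> * T powr h * real n powr (- h / 2)"
    define \<nu> where "\<nu> = real n powr (- h)"
    have \<nu>0: "0 \<le> \<nu>" unfolding \<nu>_def by simp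
    have \<delta>sq: "\<delta>\<^sup>2 = \<Lambda> * \<nu>"
    proof -
      have "(real n powr (- h / 2))\<^sup>2 = real n powr (- h)"
        using n by (simp add: power2_eq_square powr_add[symmetric])
      then show ?thesis unfolding \<delta>_def \<Lambda>_def \<nu>_def by (simp add: power_mult_distrib)
    qed
    have kd: "\<bar>K x - bernstein T K n x\<bar> \<le> \<delta>" if "x \<in> {0..T}" for x
      unfolding \<delta>_def by (rule bernstein_error[OF T h(1) _ n L that]) (use h in simp)
    have knb: "\<bar>bernstein T K n x\<bar> \<le> B" if "x \<in> {0..T}" for x
      by (rule bernstein_bound[OF T n Kb that])
    define CX where "CX = KE * (3 * X0\<^sup>2 + 3 * (\<alpha> * B)\<^sup>2 * (T * Lu) + 3 * (\<sigma>\<^sup>2 * (B\<^sup>2 * T)))"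
    have CX0: "0 \<le> CX" unfolding CX_def using KE0 T Lu0 by simp
    have XB: "(\<integral>\<^sup>+\<omega>. ennreal ((X s \<omega>)\<^sup>2) \<partial>M) \<le> ennreal CX" if s: "s \<in> {0..T}" for s
      using X_bound[OF BM T _ _ uL sol Kc Kb s] \<alpha> \<beta> unfolding CX_def KE_def Lu_def by simp
    have DB: "(\<integral>\<^sup>+\<omega>. ennreal ((X t \<omega> - Xn t \<omega>)\<^sup>2) \<partial>M)
      \<le> ennreal (KE * (4 * (\<delta> * \<alpha>)\<^sup>2 * (T * Lu) + 4 * (\<delta> * \<beta>)\<^sup>2 * (T * (T * CX)) + 2 * (\<sigma>\<^sup>2 * (\<delta>\<^sup>2 * T))))"
      using D_bound[OF BM T _ _ uL sol soln Kc bernstein_cont Kb knb kd XB CX0 t] \<alpha> \<beta>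
      unfolding KE_def Lu_def by simp
    have "KE * (4 * (\<delta> * \<alpha>)\<^sup>2 * (T * Lu) + 4 * (\<delta> * \<beta>)\<^sup>2 * (T * (T * CX)) + 2 * (\<sigma>\<^sup>2 * (\<delta>\<^sup>2 * T)))
        = (\<delta>\<^sup>2 * KE) * (q0 + q1 * Lu)"
      unfolding q0_def q1_def CX_def by (simp add: power_mult_distrib power2_eq_square algebra_simps)
    also have "\<dots> \<le> (\<delta>\<^sup>2 * KE) * ((q0 + q1) * (1 + Lu))"
    proof (intro mult_left_mono)
      show "q0 + q1 * Lu \<le> (q0 + q1) * (1 + Lu)"
        using q0 q1 Lu0 by (simp add: algebra_simps)
    qed (use KE0 in simp)
    also have "\<dots> = (\<Lambda> * KE * (q0 + q1)) * (1 + Lu) * \<nu>"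
      unfolding \<delta>sq by (simp add: algebra_simps)
    also have "\<dots> \<le> C * (1 + Lu) * \<nu>"
      unfolding C_def using Lu0 \<nu>0 by (intro mult_right_mono) auto
    finally have "KE * (4 * (\<delta> * \<alpha>)\<^sup>2 * (T * Lu) + 4 * (\<delta> * \<beta>)\<^sup>2 * (T * (T * CX)) + 2 * (\<sigma>\<^sup>2 * (\<delta>\<^sup>2 * T)))
        \<le> C * (1 + Lu) * \<nu>" .
    then show "(\<integral>\<^sup>+\<omega>. ennreal ((X t \<omega> - Xn t \<omega>)\<^sup>2) \<partial>M)
              \<le> ennreal (C * (1 + L2norm_sq M T u) * real n powr (- h))"
      using DB unfolding Lu_def \<nu>_def by (meson ennreal_leI order_trans)
  qed
qed

end
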